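(* For each $f\in\mathcal{G}_0$, the function $u:\mathcal{G}_0\to\mathbb{R}$, $u(g)=\langle f,g\rangle_{L^2([0,1])}=\int_0^1f(t)g(t)dt$, belongs to $\mathrm{Dom}(\mathbb{E})$.
   Context: $\mathcal{G}_0$ is the set of right continuous nondecreasing maps $g:[0,1[\,\to[0,1]$ extended by $g(1):=1$. Fix $\beta>0$; $\mathbb{Q}_0^\beta$ is the probability measure on $\mathcal{G}_0$ such that for every $N$ and $0=t_0<\dots<t_{N+1}=1$ the law of $(g(t_1),\dots,g(t_N))$ is $\frac{\Gamma(\beta)}{\prod_{i=0}^{N}\Gamma(\beta(t_{i+1}-t_i))}\prod_{i=0}^{N}(x_{i+1}-x_i)^{\beta(t_{i+1}-t_i)-1}dx$ on $\{0<x_1<\dots<x_N<1\}$, $x_0:=0,x_{N+1}:=1$. $\mathfrak{Z}^1(\mathcal{G}_0)$: functions $u(g)=U(\int_0^1\vec\alpha(g_s)ds)$ with $U\in\mathcal{C}^1(\mathbb{R}^m)$, $\vec\alpha\in\mathcal{C}^1([0,1],\mathbb{R}^m)$, and $\mathbb{D}u(g)=\sum_i\partial_iU(\int\vec\alpha(g_s)ds)\alpha_i'(g(\cdot))$. $(\mathbb{E},\mathrm{Dom}(\mathbb{E}))$ is the closure in $L^2(\mathcal{G}_0,\mathbb{Q}_0^\beta)$ of the (closable) form $\mathbb{E}(u,v)=\int\langle\mathbb{D}u(g),\mathbb{D}v(g)\rangle_{L^2([0,1])}d\mathbb{Q}_0^\beta(g)$ on $\mathfrak{Z}^1(\mathcal{G}_0)$.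 *)

theory Defs
  imports "HOL-Probability.Probability"
begin

text \<open>The space G_0: right continuous nondecreasing g on [0,1) with values in [0,1],
  g 1 = 1; convention: g t = 0 outside [0,1] (canonical representative).\<close>
definition G0 :: "(real \<Rightarrow> real) set" where
  "G0 = {g. (\<forall>s t. 0 \<le> s \<longrightarrow> s \<le> t \<longrightarrow> t < 1 \<longrightarrow> g s \<le> g t)
          \<and> (\<forall>t\<in>{0..<1}. continuous (at_right t) g)
          \<and> (\<forall>t\<in>{0..<1}. g t \<in> {0..1})
          \<and> g 1 = 1
          \<and> (\<forall>t. t \<notin> {0..1} \<longrightarrow> g t = 0)}"

definition xext :: "nat \<Rightarrow> (nat \<Rightarrow> real) \<Rightarrow> nat \<Rightarrow> real" where
  "xext N x i = (if i = 0 then 0 else if i = Suc N then 1 else x i)"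

text \<open>Finite dimensional (Dirichlet) density of (g(t_1),...,g(t_N)).\<close>
definition dir_density :: "real \<Rightarrow> nat \<Rightarrow> (nat \<Rightarrow> real) \<Rightarrow> (nat \<Rightarrow> real) \<Rightarrow> real" where
  "dir_density \<beta> N t x =
     (if (\<forall>i\<le>N. xext N x i < xext N x (Suc i))
      then Gamma \<beta> / (\<Prod>i\<le>N. Gamma (\<beta> * (t (Suc i) - t i)))
           * (\<Prod>i\<le>N. (xext N x (Suc i) - xext N x i) powr (\<beta> * (t (Suc i) - t i) - 1))
      else 0)"

definition is_Q0 :: "real \<Rightarrow> (real \<Rightarrow> real) measure \<Rightarrow> bool" where
  "is_Q0 \<beta> Q \<longleftrightarrow> prob_space Q \<and> space Q = G0
     \<and> sets Q = sets (restrict_space (Pi\<^sub>M UNIV (\<lambda>_. (borel :: real measure))) G0)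
     \<and> (\<forall>N t. t 0 = 0 \<and> t (Suc N) = 1 \<and> (\<forall>i\<le>N. t i < t (Suc i)) \<longrightarrow>
          distr Q (Pi\<^sub>M {1..N} (\<lambda>_. lborel)) (\<lambda>g. \<lambda>i\<in>{1..N}. g (t i))
          = density (Pi\<^sub>M {1..N} (\<lambda>_. lborel)) (\<lambda>x. ennreal (dir_density \<beta> N t x)))"

text \<open>R^m represented as functions nat => real vanishing from index m on.\<close>
definition Rm :: "nat \<Rightarrow> (nat \<Rightarrow> real) set" where
  "Rm m = {x. \<forall>i\<ge>m. x i = 0}"

definition partial_i :: "((nat \<Rightarrow> real) \<Rightarrow> real) \<Rightarrow> (nat \<Rightarrow> real) \<Rightarrow> nat \<Rightarrow> real" where
  "partial_i U x i = deriv (\<lambda>h. U (x(i := h))) (x i)"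

definition C1_Rm :: "nat \<Rightarrow> ((nat \<Rightarrow> real) \<Rightarrow> real) \<Rightarrow> bool" where
  "C1_Rm m U \<longleftrightarrow> (\<forall>i<m. \<forall>x\<in>Rm m. (\<lambda>h. U (x(i := h))) differentiable (at (x i)))
                 \<and> (\<forall>i<m. continuous_on (Rm m) (\<lambda>x. partial_i U x i))"

definition Z1_rep :: "nat \<Rightarrow> ((nat \<Rightarrow> real) \<Rightarrow> real) \<Rightarrow> (nat \<Rightarrow> real \<Rightarrow> real) \<Rightarrow> bool" where
  "Z1_rep m U \<alpha> \<longleftrightarrow> C1_Rm m U \<and> (\<forall>i<m. \<alpha> i C1_differentiable_on {0..1})"

definition z1_vec :: "nat \<Rightarrow> (nat \<Rightarrow> real \<Rightarrow> real) \<Rightarrow> (real \<Rightarrow> real) \<Rightarrow> nat \<Rightarrow> real" where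
  "z1_vec m \<alpha> g = (\<lambda>i. if i < m then integral {0..1} (\<lambda>s. \<alpha> i (g s)) else 0)"

definition z1_fun :: "nat \<Rightarrow> ((nat \<Rightarrow> real) \<Rightarrow> real) \<Rightarrow> (nat \<Rightarrow> real \<Rightarrow> real) \<Rightarrow> (real \<Rightarrow> real) \<Rightarrow> real" where
  "z1_fun m U \<alpha> g = U (z1_vec m \<alpha> g)"

definition z1_grad :: "nat \<Rightarrow> ((nat \<Rightarrow> real) \<Rightarrow> real) \<Rightarrow> (nat \<Rightarrow> real \<Rightarrow> real) \<Rightarrow> (real \<Rightarrow> real) \<Rightarrow> real \<Rightarrow> real" where
  "z1_grad m U \<alpha> g t = (\<Sum>i<m. partial_i U (z1_vec m \<alpha> g) i * deriv (\<alpha> i) (g t))"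

text \<open>Domain of the closure of the form in L^2(Q).\<close>
definition Dom_E :: "(real \<Rightarrow> real) measure \<Rightarrow> ((real \<Rightarrow> real) \<Rightarrow> real) set" where
  "Dom_E Q = {u. u \<in> borel_measurable Q \<and> (\<integral>\<^sup>+ g. ennreal ((u g)\<^sup>2) \<partial>Q) < \<infinity>
     \<and> (\<exists>m U \<alpha>. (\<forall>n. Z1_rep (m n) (U n) (\<alpha> n))
          \<and> (\<lambda>n. \<integral>\<^sup>+ g. ennreal ((z1_fun (m n) (U n) (\<alpha> n) g - u g)\<^sup>2) \<partial>Q) \<longlonglongrightarrow> 0
          \<and> (\<forall>\<epsilon>>0. \<exists>N. \<forall>n\<ge>N. \<forall>k\<ge>N.
               (\<integral>\<^sup>+ g. ennreal (integral {0..1}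
                   (\<lambda>t. (z1_grad (m n) (U n) (\<alpha> n) g t - z1_grad (m k) (U k) (\<alpha> k) g t)\<^sup>2)) \<partial>Q)
               < \<epsilon>))}"

end

theory Submission
  imports Defs
begin

lemma G0_mono: assumes "g \<in> G0" "0 \<le> s" "s \<le> t" "t \<le> 1" shows "g s \<le> g t"
proof (cases "t < 1")
  case True thus ?thesis using assms unfolding G0_def by auto
next
  case False hence t: "t = 1" using assms by auto
  show ?thesis proof (cases "s < 1")
    case True thus ?thesis using assms t unfolding G0_def by auto
  next
    case False thus ?thesis using assms t by (smt (verit))
  qed
qed

lemma G0_bounds: assumes "g \<in> G0" shows "0 \<le> g t" "g t \<le> 1"
proof -
  have "g t \<in> {0..1}" using assms unfolding G0_def
    by (cases "t \<in> {0..<1}"; cases "t = 1"; auto)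
  thus "0 \<le> g t" "g t \<le> 1" by auto
qed

lemma G0_rc: assumes "g \<in> G0" "0 \<le> t" "t < 1" shows "continuous (at_right t) g"
  using assms unfolding G0_def by auto

lemma G0_one: assumes "g \<in> G0" shows "g 1 = 1" using assms unfolding G0_def by auto

locale QS =
  fixes Q :: "(real \<Rightarrow> real) measure"
  assumes prob: "prob_space Q" and sp: "space Q = G0"
    and st: "sets Q = sets (restrict_space (Pi\<^sub>M UNIV (\<lambda>_. (borel :: real measure))) G0)"
begin

abbreviation "QL \<equiv> Q \<Otimes>\<^sub>M (lborel :: real measure)"

lemma comp_meas: "(\<lambda>g. g x) \<in> borel_measurable Q"
  apply (subst measurable_cong_sets[OF st refl])
  apply (rule measurable_restrict_space1)
  apply (rule measurable_component_singleton) by simp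

lemma ev_meas: "(\<lambda>(g,t). g t) \<in> borel_measurable QL"
proof -
  define e where "e k = (\<lambda>(g::real\<Rightarrow>real,t::real). indicator {0..1} t * g (real_of_int \<lceil>real (Suc k) * t\<rceil> / real (Suc k)))" for k
  have em: "e k \<in> borel_measurable QL" for k
  proof -
    have A: "(\<lambda>x. indicator {0..1::real} (snd x) * (fst x) (real_of_int i / real (Suc k))) \<in> borel_measurable QL" for i :: int
    proof -
      have h2: "(\<lambda>x. (fst x) (real_of_int i / real (Suc k))) \<in> borel_measurable QL"
        using measurable_compose[OF measurable_fst comp_meas] by simp
      have h1: "(\<lambda>x. indicator {0..1::real} (snd x) :: real) \<in> borel_measurable QL"
        by (rule measurable_compose[OF measurable_snd], rule borel_measurable_indicator) auto
      show ?thesis by (rule borel_measurable_times[OF h1 h2])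
    qed
    have B: "(\<lambda>x. \<lceil>real (Suc k) * snd x\<rceil>) \<in> measurable QL (count_space UNIV)"
      by measurable
    note measurable_compose_countable[OF A B]
    thus ?thesis unfolding e_def by (simp add: case_prod_beta')
  qed
  show ?thesis
  proof (rule borel_measurable_LIMSEQ_real[OF _ em])
    fix x assume "x \<in> space QL"
    then obtain g t where x: "x = (g,t)" and g: "g \<in> G0" by (auto simp: space_pair_measure sp)
    show "(\<lambda>k. e k x) \<longlonglongrightarrow> (case x of (g, t) \<Rightarrow> g t)"
    proof (cases "t \<in> {0..<1}")
      case False
      show ?thesis
      proof (cases "t = 1")
        case True
        have "e k x = g t" for k
        proof -
          have "\<lceil>real (Suc k) * 1\<rceil> = int (Suc k)" by (simp only: mult_1_right ceiling_of_nat)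
          thus ?thesis using True x unfolding e_def by simp
        qed
        thus ?thesis using x by simp
      next
        case False2: False
        hence "t \<notin> {0..1}" using False by auto
        hence "e k x = 0" "g t = 0" for k using x g unfolding e_def G0_def by auto
        thus ?thesis using x by simp
      qed
    next
      case True
      have rc: "continuous (at_right t) g" using G0_rc[OF g] True by auto
      show ?thesis unfolding x
      proof (rule LIMSEQ_I)
        fix r :: real assume r: "r > 0"
        from rc[unfolded continuous_within, THEN tendstoD, OF r]
        obtain d where d: "d > 0" "\<And>s. s \<in> {t<..} \<Longrightarrow> dist s t < d \<Longrightarrow> dist (g s) (g t) < r"
          unfolding eventually_at by auto
        obtain N :: nat where N: "1 / d < real N" using reals_Archimedean2 by blast
        show "\<exists>no. \<forall>n\<ge>no. norm (e n (g,t) - (case (g,t) of (g,t) \<Rightarrow> g t)) < r"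
        proof (intro exI allI impI)
          fix n assume n: "n \<ge> N"
          define s where "s = real_of_int \<lceil>real (Suc n) * t\<rceil> / real (Suc n)"
          have "s \<ge> t" unfolding s_def by (simp add: field_simps)
          moreover have "s < t + 1 / real (Suc n)"
          proof -
            have "real_of_int \<lceil>real (Suc n) * t\<rceil> < real (Suc n) * t + 1"
              using ceiling_correct[of "real (Suc n) * t"] by linarith
            hence "s < (real (Suc n) * t + 1) / real (Suc n)" unfolding s_def
              by (intro divide_strict_right_mono) auto
            also have "\<dots> = t + 1 / real (Suc n)" by (simp add: field_simps)
            finally show ?thesis .
          qed
          moreover have "1 / real (Suc n) < d"
          proof -
            have "real N \<le> real n" using n by simp
            hence "d * real N \<le> d * real n" using d(1) by (simp add: mult_left_mono)
            moreover have "1 < d * real N" using N d(1) by (simp add: field_simps)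
            ultimately have "1 < d + d * real n" using d(1) by linarith
            thus ?thesis using d(1) by (simp add: field_simps)
          qed
          ultimately have "dist (g s) (g t) < r"
            using d(2)[of s] r by (cases "s = t") (auto simp: dist_real_def)
          thus "norm (e n (g,t) - (case (g,t) of (g,t) \<Rightarrow> g t)) < r"
            using True unfolding e_def s_def by (simp add: dist_real_def)
        qed
      qed
    qed
  qed
qed

lemma int_tools:
  fixes D :: "(real \<Rightarrow> real) \<Rightarrow> real \<Rightarrow> real"
  assumes Dm: "(\<lambda>(g,t). D g t) \<in> borel_measurable QL" and Db: "\<And>g t. g \<in> G0 \<Longrightarrow> \<bar>D g t\<bar> \<le> B"
  shows "\<And>g. g \<in> G0 \<Longrightarrow> D g integrable_on {0..1}"
   and "\<And>g. g \<in> G0 \<Longrightarrow> \<bar>integral {0..1} (D g)\<bar> \<le> B"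
   and "(\<lambda>g. integral {0..1} (D g)) \<in> borel_measurable Q"
proof -
  have si: "set_integrable lborel {0..1} (D g)" if g: "g \<in> G0" for g
  proof -
    have "(\<lambda>t. D g t) \<in> borel_measurable lborel"
      using measurable_Pair2[OF Dm, of g] g sp by simp
    thus ?thesis unfolding set_integrable_def
      by (intro integrableI_bounded_set_indicator[where B=B]) (auto simp: Db[OF g])
  qed
  show ii: "D g integrable_on {0..1}" if "g \<in> G0" for g
    using set_borel_integral_eq_integral(1)[OF si[OF that]] .
  show "\<bar>integral {0..1} (D g)\<bar> \<le> B" if g: "g \<in> G0" for g
  proof -
    have B0: "0 \<le> B" using Db[OF g, of 0] by linarith
    have "norm (integral (cbox 0 1) (D g)) \<le> B * Henstock_Kurzweil_Integration.content (cbox 0 (1::real))"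
      by (rule has_integral_bound[OF B0]) (use ii[OF g] Db[OF g] in \<open>auto simp: has_integral_integral\<close>)
    thus ?thesis by simp
  qed
  have m2: "(\<lambda>g. \<integral>t. indicator {0..1} t *\<^sub>R D g t \<partial>lborel) \<in> borel_measurable Q"
  proof (rule lborel.borel_measurable_lebesgue_integral)
    have h1: "(\<lambda>x. indicator {0..1::real} (snd x) :: real) \<in> borel_measurable QL"
      by (rule measurable_compose[OF measurable_snd], rule borel_measurable_indicator) auto
    show "(\<lambda>(g,t). indicator {0..1} t *\<^sub>R D g t) \<in> borel_measurable QL"
      using borel_measurable_times[OF h1 Dm] by (simp add: case_prod_beta')
  qed
  show "(\<lambda>g. integral {0..1} (D g)) \<in> borel_measurable Q"
  proof (rule measurable_cong[THEN iffD1, OF _ m2])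
    fix g assume "g \<in> space Q"
    hence g: "g \<in> G0" using sp by simp
    show "(\<integral>t. indicator {0..1} t *\<^sub>R D g t \<partial>lborel) = integral {0..1} (D g)"
      using set_borel_integral_eq_integral(2)[OF si[OF g]] unfolding set_lebesgue_integral_def .
  qed
qed

end

definition P1 :: "nat \<Rightarrow> (nat \<Rightarrow> real) \<Rightarrow> nat \<Rightarrow> real" where
  "P1 m1 y = (\<lambda>i. if i < m1 then y i else 0)"
definition P2 :: "nat \<Rightarrow> nat \<Rightarrow> (nat \<Rightarrow> real) \<Rightarrow> nat \<Rightarrow> real" where
  "P2 m1 m2 y = (\<lambda>i. if i < m2 then y (i + m1) else 0)"
definition midU where
  "midU m1 m2 U1 U2 = (\<lambda>y. (U1 (P1 m1 y) + U2 (P2 m1 m2 y)) / 2)"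
definition midA :: "nat \<Rightarrow> (nat \<Rightarrow> real \<Rightarrow> real) \<Rightarrow> (nat \<Rightarrow> real \<Rightarrow> real) \<Rightarrow> nat \<Rightarrow> real \<Rightarrow> real" where
  "midA m1 a1 a2 = (\<lambda>i. if i < m1 then a1 i else a2 (i - m1))"

lemma P1_Rm: "P1 m1 y \<in> Rm m1" unfolding P1_def Rm_def by auto
lemma P2_Rm: "P2 m1 m2 y \<in> Rm m2" unfolding P2_def Rm_def by auto

lemma P1_vec: "P1 m1 (z1_vec (m1+m2) (midA m1 a1 a2) g) = z1_vec m1 a1 g"
  unfolding P1_def z1_vec_def midA_def by auto
lemma P2_vec: "P2 m1 m2 (z1_vec (m1+m2) (midA m1 a1 a2) g) = z1_vec m2 a2 g"
  unfolding P2_def z1_vec_def midA_def by auto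

lemma mid_fun: "z1_fun (m1+m2) (midU m1 m2 U1 U2) (midA m1 a1 a2) g = (z1_fun m1 U1 a1 g + z1_fun m2 U2 a2 g) / 2"
  unfolding z1_fun_def midU_def using P1_vec P2_vec by simp

lemma P1_upd1: "i < m1 \<Longrightarrow> P1 m1 (x(i:=h)) = (P1 m1 x)(i:=h)"
  unfolding P1_def by auto
lemma P2_upd1: "i < m1 \<Longrightarrow> P2 m1 m2 (x(i:=h)) = P2 m1 m2 x"
  unfolding P2_def by auto
lemma P1_upd2: "m1 \<le> i \<Longrightarrow> P1 m1 (x(i:=h)) = P1 m1 x"
  unfolding P1_def by auto
lemma P2_upd2: "m1 \<le> i \<Longrightarrow> i < m1 + m2 \<Longrightarrow> P2 m1 m2 (x(i:=h)) = (P2 m1 m2 x)(i - m1 := h)"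
  unfolding P2_def by (auto simp: fun_eq_iff)

lemma deriv_half:
  fixes F :: "real \<Rightarrow> real"
  assumes "F differentiable (at a)"
  shows "(\<lambda>h. (F h + c) / 2) differentiable (at a)" "deriv (\<lambda>h. (F h + c) / 2) a = deriv F a / 2"
    "(\<lambda>h. (c + F h) / 2) differentiable (at a)" "deriv (\<lambda>h. (c + F h) / 2) a = deriv F a / 2"
proof -
  have d: "(F has_real_derivative deriv F a) (at a)"
    using assms DERIV_deriv_iff_real_differentiable by blast
  have d1: "((\<lambda>h. (F h + c) / 2) has_real_derivative (deriv F a / 2)) (at a)"
    by (auto intro!: derivative_eq_intros d)
  have d2: "((\<lambda>h. (c + F h) / 2) has_real_derivative (deriv F a / 2)) (at a)"
    by (auto intro!: derivative_eq_intros d)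
  show "(\<lambda>h. (F h + c) / 2) differentiable (at a)" "deriv (\<lambda>h. (F h + c) / 2) a = deriv F a / 2"
    "(\<lambda>h. (c + F h) / 2) differentiable (at a)" "deriv (\<lambda>h. (c + F h) / 2) a = deriv F a / 2"
    using d1 d2 DERIV_imp_deriv real_differentiable_def by blast+
qed

lemma partial_mid1:
  assumes "i < m1" "C1_Rm m1 U1"
  shows "(\<lambda>h. midU m1 m2 U1 U2 (x(i:=h))) differentiable (at (x i))"
    "partial_i (midU m1 m2 U1 U2) x i = partial_i U1 (P1 m1 x) i / 2"
proof -
  have e: "(\<lambda>h. midU m1 m2 U1 U2 (x(i:=h))) = (\<lambda>h. (U1 ((P1 m1 x)(i:=h)) + U2 (P2 m1 m2 x)) / 2)"
    unfolding midU_def using P1_upd1[OF assms(1)] P2_upd1[OF assms(1)] by simp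
  have xi: "P1 m1 x i = x i" using assms(1) unfolding P1_def by simp
  have dF: "(\<lambda>h. U1 ((P1 m1 x)(i:=h))) differentiable (at (x i))"
    using assms(2) P1_Rm assms(1) xi unfolding C1_Rm_def by metis
  show "(\<lambda>h. midU m1 m2 U1 U2 (x(i:=h))) differentiable (at (x i))"
    unfolding e by (rule deriv_half(1)[OF dF])
  show "partial_i (midU m1 m2 U1 U2) x i = partial_i U1 (P1 m1 x) i / 2"
    unfolding partial_i_def e xi by (rule deriv_half(2)[OF dF])
qed

lemma partial_mid2:
  assumes "m1 \<le> i" "i < m1 + m2" "C1_Rm m2 U2"
  shows "(\<lambda>h. midU m1 m2 U1 U2 (x(i:=h))) differentiable (at (x i))"
    "partial_i (midU m1 m2 U1 U2) x i = partial_i U2 (P2 m1 m2 x) (i - m1) / 2"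
proof -
  have e: "(\<lambda>h. midU m1 m2 U1 U2 (x(i:=h))) = (\<lambda>h. (U1 (P1 m1 x) + U2 ((P2 m1 m2 x)(i - m1:=h))) / 2)"
    unfolding midU_def using P1_upd2[OF assms(1)] P2_upd2[OF assms(1,2)] by simp
  have xi: "P2 m1 m2 x (i - m1) = x i" using assms(1,2) unfolding P2_def by simp
  have dF: "(\<lambda>h. U2 ((P2 m1 m2 x)(i - m1:=h))) differentiable (at (x i))"
    using assms P2_Rm xi unfolding C1_Rm_def by (metis less_diff_conv2 add.commute)
  show "(\<lambda>h. midU m1 m2 U1 U2 (x(i:=h))) differentiable (at (x i))"
    unfolding e by (rule deriv_half(3)[OF dF])
  show "partial_i (midU m1 m2 U1 U2) x i = partial_i U2 (P2 m1 m2 x) (i - m1) / 2"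
    unfolding partial_i_def e xi by (rule deriv_half(4)[OF dF])
qed

lemma cont_P1: "continuous_on S (P1 m1)"
  unfolding P1_def
  apply (intro continuous_on_coordinatewise_then_product)
  subgoal for i by (cases "i < m1") (auto intro: continuous_on_subset[OF continuous_on_product_coordinates])
  done
lemma cont_P2: "continuous_on S (P2 m1 m2)"
  unfolding P2_def
  apply (intro continuous_on_coordinatewise_then_product)
  subgoal for i by (cases "i < m2") (auto intro: continuous_on_subset[OF continuous_on_product_coordinates])
  done

lemma mid_Z1:
  assumes "Z1_rep m1 U1 a1" "Z1_rep m2 U2 a2"
  shows "Z1_rep (m1+m2) (midU m1 m2 U1 U2) (midA m1 a1 a2)"
proof -
  have C1: "C1_Rm m1 U1" "C1_Rm m2 U2" using assms unfolding Z1_rep_def by auto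
  have "C1_Rm (m1+m2) (midU m1 m2 U1 U2)"
    unfolding C1_Rm_def
  proof (intro conjI allI impI ballI)
    fix i x assume i: "i < m1 + m2"
    show "(\<lambda>h. midU m1 m2 U1 U2 (x(i:=h))) differentiable (at (x i))"
      using partial_mid1(1)[OF _ C1(1)] partial_mid2(1)[OF _ i C1(2)] by (cases "i < m1") auto
  next
    fix i assume i: "i < m1 + m2"
    show "continuous_on (Rm (m1 + m2)) (\<lambda>x. partial_i (midU m1 m2 U1 U2) x i)"
    proof (cases "i < m1")
      case True
      have c: "continuous_on (Rm m1) (\<lambda>x. partial_i U1 x i)" using C1(1) True unfolding C1_Rm_def by auto
      have "continuous_on (Rm (m1 + m2)) (\<lambda>x. partial_i U1 (P1 m1 x) i / 2)"
        by (intro continuous_intros continuous_on_compose2[OF c cont_P1]) (auto simp: P1_Rm)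
      thus ?thesis by (rule continuous_on_eq) (simp add: partial_mid1(2)[OF True C1(1)])
    next
      case False
      have c: "continuous_on (Rm m2) (\<lambda>x. partial_i U2 x (i - m1))" using C1(2) False i unfolding C1_Rm_def by auto
      have "continuous_on (Rm (m1 + m2)) (\<lambda>x. partial_i U2 (P2 m1 m2 x) (i - m1) / 2)"
        by (intro continuous_intros continuous_on_compose2[OF c cont_P2]) (auto simp: P2_Rm)
      thus ?thesis by (rule continuous_on_eq) (use partial_mid2(2)[OF _ i C1(2)] False in simp)
    qed
  qed
  moreover have "\<forall>i<m1+m2. midA m1 a1 a2 i C1_differentiable_on {0..1}"
    using assms unfolding Z1_rep_def midA_def by auto
  ultimately show ?thesis unfolding Z1_rep_def by auto
qed

lemma sum_split_add: fixes m1 m2 :: nat shows "(\<Sum>i<m1+m2. F i) = (\<Sum>i<m1. F i) + (\<Sum>i<m2. F (i + m1))"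
  by (induction m2) (auto simp: add.commute add.left_commute)

lemma mid_grad:
  assumes "Z1_rep m1 U1 a1" "Z1_rep m2 U2 a2"
  shows "z1_grad (m1+m2) (midU m1 m2 U1 U2) (midA m1 a1 a2) g t = (z1_grad m1 U1 a1 g t + z1_grad m2 U2 a2 g t) / 2"
proof -
  have C1: "C1_Rm m1 U1" "C1_Rm m2 U2" using assms unfolding Z1_rep_def by auto
  let ?v = "z1_vec (m1+m2) (midA m1 a1 a2) g"
  let ?F = "\<lambda>i. partial_i (midU m1 m2 U1 U2) ?v i * deriv (midA m1 a1 a2 i) (g t)"
  have "(\<Sum>i<m1+m2. ?F i) = (\<Sum>i<m1. ?F i) + (\<Sum>i<m2. ?F (i + m1))"
    by (rule sum_split_add)
  also have "(\<Sum>i<m1. ?F i) = (\<Sum>i<m1. partial_i U1 (z1_vec m1 a1 g) i * deriv (a1 i) (g t)) / 2"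
    unfolding sum_divide_distrib
    by (intro sum.cong refl) (simp add: partial_mid1(2)[OF _ C1(1)] P1_vec, simp add: midA_def)
  also have "(\<Sum>i<m2. ?F (i + m1)) = (\<Sum>i<m2. partial_i U2 (z1_vec m2 a2 g) i * deriv (a2 i) (g t)) / 2"
    unfolding sum_divide_distrib
    by (intro sum.cong refl) (simp add: partial_mid2(2)[OF _ _ C1(2)] P2_vec, simp add: midA_def)
  finally show ?thesis unfolding z1_grad_def by (simp add: add_divide_distrib)
qed

definition rv where "rv r = z1_fun (fst r) (fst (snd r)) (snd (snd r))"
definition rg where "rg r = z1_grad (fst r) (fst (snd r)) (snd (snd r))"
definition rmid where "rmid r1 r2 = (fst r1 + fst r2, midU (fst r1) (fst r2) (fst (snd r1)) (fst (snd r2)),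
    midA (fst r1) (snd (snd r1)) (snd (snd r2)))"

context QS begin

definition Good where
  "Good r \<longleftrightarrow> Z1_rep (fst r) (fst (snd r)) (snd (snd r)) \<and> (\<lambda>(g,t). rg r g t) \<in> borel_measurable QL
     \<and> (\<exists>B. \<forall>g\<in>G0. \<forall>t. \<bar>rg r g t\<bar> \<le> B)"

lemma Good_mid:
  assumes "Good r1" "Good r2"
  shows "Good (rmid r1 r2)" "rv (rmid r1 r2) g = (rv r1 g + rv r2 g) / 2"
    "rg (rmid r1 r2) g t = (rg r1 g t + rg r2 g t) / 2"
proof -
  obtain m1 U1 a1 where r1: "r1 = (m1,U1,a1)" by (cases r1) auto
  obtain m2 U2 a2 where r2: "r2 = (m2,U2,a2)" by (cases r2) auto
  have Z: "Z1_rep m1 U1 a1" "Z1_rep m2 U2 a2" using assms r1 r2 unfolding Good_def by auto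
  show gm: "rg (rmid r1 r2) g t = (rg r1 g t + rg r2 g t) / 2" for g t
    unfolding rg_def rmid_def r1 r2 using mid_grad[OF Z] by simp
  show "rv (rmid r1 r2) g = (rv r1 g + rv r2 g) / 2"
    unfolding rv_def rmid_def r1 r2 using mid_fun by simp
  have m1: "(\<lambda>(g,t). rg r1 g t) \<in> borel_measurable QL" and m2: "(\<lambda>(g,t). rg r2 g t) \<in> borel_measurable QL"
    using assms unfolding Good_def by auto
  obtain B1 where B1: "\<forall>g\<in>G0. \<forall>t. \<bar>rg r1 g t\<bar> \<le> B1" using assms(1) unfolding Good_def by auto
  obtain B2 where B2: "\<forall>g\<in>G0. \<forall>t. \<bar>rg r2 g t\<bar> \<le> B2" using assms(2) unfolding Good_def by auto
  have "(\<lambda>(g,t). (rg r1 g t + rg r2 g t) / 2) \<in> borel_measurable QL"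
    using m1 m2 by (simp add: case_prod_beta')
  hence "(\<lambda>(g,t). rg (rmid r1 r2) g t) \<in> borel_measurable QL" by (simp add: gm)
  moreover have "\<forall>g\<in>G0. \<forall>t. \<bar>rg (rmid r1 r2) g t\<bar> \<le> (B1 + B2) / 2"
  proof (intro ballI allI)
    fix g t assume "g \<in> G0"
    hence "\<bar>rg r1 g t\<bar> \<le> B1" "\<bar>rg r2 g t\<bar> \<le> B2" using B1 B2 by auto
    hence "rg r1 g t \<le> B1" "- rg r1 g t \<le> B1" "rg r2 g t \<le> B2" "- rg r2 g t \<le> B2" by (simp_all add: abs_le_iff)
    thus "\<bar>rg (rmid r1 r2) g t\<bar> \<le> (B1 + B2) / 2" unfolding gm abs_le_iff by (simp add: field_simps)
  qed
  moreover have "Z1_rep (fst (rmid r1 r2)) (fst (snd (rmid r1 r2))) (snd (snd (rmid r1 r2)))"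
    unfolding rmid_def r1 r2 using mid_Z1[OF Z] by simp
  ultimately show "Good (rmid r1 r2)" unfolding Good_def by blast
qed

lemma gq_tools:
  fixes D :: "(real \<Rightarrow> real) \<Rightarrow> real \<Rightarrow> real"
  assumes Dm: "(\<lambda>(g,t). D g t) \<in> borel_measurable QL" and Db: "\<And>g t. g \<in> G0 \<Longrightarrow> \<bar>D g t\<bar> \<le> B"
  shows "integrable Q (\<lambda>g. integral {0..1} (D g))"
proof -
  interpret prob_space Q by (rule prob)
  show ?thesis
    by (rule integrable_const_bound[where B=B]) (auto simp: sp int_tools[OF Dm Db])
qed

definition nrm where "nrm r = (\<integral>g. integral {0..1} (\<lambda>t. (rg r g t)\<^sup>2) \<partial>Q)"
definition dst where "dst r1 r2 = (\<integral>g. integral {0..1} (\<lambda>t. (rg r1 g t - rg r2 g t)\<^sup>2) \<partial>Q)"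

lemma Good_sq:
  assumes "Good r1" "Good r2"
  shows "(\<lambda>(g,t). (rg r1 g t - rg r2 g t)\<^sup>2) \<in> borel_measurable QL"
    "\<exists>B. \<forall>g t. g \<in> G0 \<longrightarrow> \<bar>(rg r1 g t - rg r2 g t)\<^sup>2\<bar> \<le> B"
    "(\<lambda>(g,t). (rg r1 g t)\<^sup>2) \<in> borel_measurable QL"
    "\<exists>B. \<forall>g t. g \<in> G0 \<longrightarrow> \<bar>(rg r1 g t)\<^sup>2\<bar> \<le> B"
proof -
  have m1: "(\<lambda>(g,t). rg r1 g t) \<in> borel_measurable QL" and m2: "(\<lambda>(g,t). rg r2 g t) \<in> borel_measurable QL"
    using assms unfolding Good_def by auto
  obtain B1 where B1: "\<forall>g\<in>G0. \<forall>t. \<bar>rg r1 g t\<bar> \<le> B1" using assms(1) unfolding Good_def by auto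
  obtain B2 where B2: "\<forall>g\<in>G0. \<forall>t. \<bar>rg r2 g t\<bar> \<le> B2" using assms(2) unfolding Good_def by auto
  show "(\<lambda>(g,t). (rg r1 g t - rg r2 g t)\<^sup>2) \<in> borel_measurable QL"
    "(\<lambda>(g,t). (rg r1 g t)\<^sup>2) \<in> borel_measurable QL"
    using m1 m2 by (simp_all add: case_prod_beta')
  have "\<bar>(rg r1 g t - rg r2 g t)\<^sup>2\<bar> \<le> (B1 + B2)\<^sup>2" if "g \<in> G0" for g t
  proof -
    have "\<bar>rg r1 g t\<bar> \<le> B1" "\<bar>rg r2 g t\<bar> \<le> B2" using B1 B2 that by auto
    hence "rg r1 g t \<le> B1" "- rg r1 g t \<le> B1" "rg r2 g t \<le> B2" "- rg r2 g t \<le> B2" by (simp_all add: abs_le_iff)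
    hence "\<bar>rg r1 g t - rg r2 g t\<bar> \<le> B1 + B2" unfolding abs_le_iff by (simp add: field_simps)
    hence "\<bar>rg r1 g t - rg r2 g t\<bar>\<^sup>2 \<le> (B1 + B2)\<^sup>2" by (intro power_mono) auto
    thus ?thesis by simp
  qed
  thus "\<exists>B. \<forall>g t. g \<in> G0 \<longrightarrow> \<bar>(rg r1 g t - rg r2 g t)\<^sup>2\<bar> \<le> B" by blast
  have "\<bar>(rg r1 g t)\<^sup>2\<bar> \<le> B1\<^sup>2" if "g \<in> G0" for g t
  proof -
    have "\<bar>rg r1 g t\<bar>\<^sup>2 \<le> B1\<^sup>2" using B1 that by (intro power_mono) auto
    thus ?thesis by simp
  qed
  thus "\<exists>B. \<forall>g t. g \<in> G0 \<longrightarrow> \<bar>(rg r1 g t)\<^sup>2\<bar> \<le> B" by blast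
qed

lemma parallelogram:
  assumes "Good r1" "Good r2"
  shows "dst r1 r2 = 2 * nrm r1 + 2 * nrm r2 - 4 * nrm (rmid r1 r2)"
proof -
  have G: "Good (rmid r1 r2)" using Good_mid[OF assms] by simp
  obtain B1 where mB1: "(\<lambda>(g,t). (rg r1 g t)\<^sup>2) \<in> borel_measurable QL" "\<And>g t. g \<in> G0 \<Longrightarrow> \<bar>(rg r1 g t)\<^sup>2\<bar> \<le> B1"
    using Good_sq[OF assms(1) assms(1)] by blast
  obtain B2 where mB2: "(\<lambda>(g,t). (rg r2 g t)\<^sup>2) \<in> borel_measurable QL" "\<And>g t. g \<in> G0 \<Longrightarrow> \<bar>(rg r2 g t)\<^sup>2\<bar> \<le> B2"
    using Good_sq[OF assms(2) assms(2)] by blast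
  obtain B3 where mB3: "(\<lambda>(g,t). (rg (rmid r1 r2) g t)\<^sup>2) \<in> borel_measurable QL" "\<And>g t. g \<in> G0 \<Longrightarrow> \<bar>(rg (rmid r1 r2) g t)\<^sup>2\<bar> \<le> B3"
    using Good_sq[OF G G] by blast
  have pt: "integral {0..1} (\<lambda>t. (rg r1 g t - rg r2 g t)\<^sup>2) =
     2 * integral {0..1} (\<lambda>t. (rg r1 g t)\<^sup>2) + 2 * integral {0..1} (\<lambda>t. (rg r2 g t)\<^sup>2)
      - 4 * integral {0..1} (\<lambda>t. (rg (rmid r1 r2) g t)\<^sup>2)" if g: "g \<in> G0" for g
  proof -
    have i1: "(\<lambda>t. (rg r1 g t)\<^sup>2) integrable_on {0..1}" using int_tools(1)[OF mB1] g by blast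
    have i2: "(\<lambda>t. (rg r2 g t)\<^sup>2) integrable_on {0..1}" using int_tools(1)[OF mB2] g by blast
    have i3: "(\<lambda>t. (rg (rmid r1 r2) g t)\<^sup>2) integrable_on {0..1}" using int_tools(1)[OF mB3] g by blast
    have e: "(\<lambda>t. (rg r1 g t - rg r2 g t)\<^sup>2) = (\<lambda>t. (2 * (rg r1 g t)\<^sup>2 + 2 * (rg r2 g t)\<^sup>2) - 4 * (rg (rmid r1 r2) g t)\<^sup>2)"
      by (rule ext) (simp add: Good_mid(3)[OF assms] power2_eq_square field_simps)
    show ?thesis unfolding e
      using i1 i2 i3 by (simp add: integral_diff integral_add integrable_diff integrable_add integrable_on_cmult_left integral_mult_right)
  qed
  have I1: "integrable Q (\<lambda>g. integral {0..1} (\<lambda>t. (rg r1 g t)\<^sup>2))" by (rule gq_tools[OF mB1]) auto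
  have I2: "integrable Q (\<lambda>g. integral {0..1} (\<lambda>t. (rg r2 g t)\<^sup>2))" by (rule gq_tools[OF mB2]) auto
  have I3: "integrable Q (\<lambda>g. integral {0..1} (\<lambda>t. (rg (rmid r1 r2) g t)\<^sup>2))" by (rule gq_tools[OF mB3]) auto
  have "dst r1 r2 = (\<integral>g. 2 * integral {0..1} (\<lambda>t. (rg r1 g t)\<^sup>2) + 2 * integral {0..1} (\<lambda>t. (rg r2 g t)\<^sup>2)
      - 4 * integral {0..1} (\<lambda>t. (rg (rmid r1 r2) g t)\<^sup>2) \<partial>Q)"
    unfolding dst_def by (rule Bochner_Integration.integral_cong) (auto simp: sp pt)
  also have "\<dots> = 2 * nrm r1 + 2 * nrm r2 - 4 * nrm (rmid r1 r2)"
    unfolding nrm_def using I1 I2 I3 by simp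
  finally show ?thesis .
qed

lemma nrm_nonneg: "0 \<le> nrm r"
proof -
  have "0 \<le> integral {0..1} (\<lambda>t. (rg r g t)\<^sup>2)" for g
    by (cases "(\<lambda>t. (rg r g t)\<^sup>2) integrable_on {0..1}") (auto intro: integral_nonneg simp: not_integrable_integral)
  thus ?thesis unfolding nrm_def by (simp add: Bochner_Integration.integral_nonneg)
qed

lemma dst_nn:
  assumes "Good r1" "Good r2"
  shows "(\<integral>\<^sup>+ g. ennreal (integral {0..1} (\<lambda>t. (rg r1 g t - rg r2 g t)\<^sup>2)) \<partial>Q) = ennreal (dst r1 r2)"
proof -
  obtain B where mB: "(\<lambda>(g,t). (rg r1 g t - rg r2 g t)\<^sup>2) \<in> borel_measurable QL" "\<And>g t. g \<in> G0 \<Longrightarrow> \<bar>(rg r1 g t - rg r2 g t)\<^sup>2\<bar> \<le> B"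
    using Good_sq[OF assms] by blast
  have "0 \<le> integral {0..1} (\<lambda>t. (rg r1 g t - rg r2 g t)\<^sup>2)" for g
    by (cases "(\<lambda>t. (rg r1 g t - rg r2 g t)\<^sup>2) integrable_on {0..1}") (auto intro: integral_nonneg simp: not_integrable_integral)
  thus ?thesis unfolding dst_def
    by (intro nn_integral_eq_integral gq_tools[OF mB]) auto
qed

end

lemma avg_le: "x \<le> c \<Longrightarrow> y \<le> c \<Longrightarrow> (x + y) / 2 \<le> (c::real)" by (simp add: field_simps)

lemma lin4: "(a::real) \<le> x \<Longrightarrow> p \<le> dd + c \<Longrightarrow> q \<le> dd + c \<Longrightarrow> D = 2*p+2*q-4*x \<Longrightarrow> D \<le> 4*(dd - a) + 4*c"
  by (smt (verit))

context QS begin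

lemma dom_from_approx:
  fixes u :: "(real \<Rightarrow> real) \<Rightarrow> real"
  assumes um: "u \<in> borel_measurable Q" and ub: "\<And>g. g \<in> G0 \<Longrightarrow> \<bar>u g\<bar> \<le> 1"
  and approx: "\<And>N. \<exists>r. Good r \<and> (\<forall>g\<in>G0. \<bar>rv r g - u g\<bar> \<le> 1 / real (Suc N)) \<and> nrm r \<le> C"
  shows "u \<in> Dom_E Q"
proof -
  interpret prob_space Q by (rule prob)
  define T where "T N = {r. Good r \<and> (\<forall>g\<in>G0. \<bar>rv r g - u g\<bar> \<le> 1 / real (Suc N))}" for N
  define d where "d N = Inf (nrm ` T N)" for N
  have ne: "T N \<noteq> {}" for N using approx[of N] unfolding T_def by blast
  have bb: "bdd_below (nrm ` T N)" for N using nrm_nonneg by (intro bdd_belowI[of _ 0]) auto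
  have dle: "d N \<le> nrm r" if "r \<in> T N" for N r unfolding d_def using bb that by (intro cInf_lower) auto
  have dC: "d N \<le> C" for N
  proof -
    obtain r where "Good r" "\<forall>g\<in>G0. \<bar>rv r g - u g\<bar> \<le> 1 / real (Suc N)" "nrm r \<le> C" using approx by blast
    hence "r \<in> T N" unfolding T_def by auto
    with dle \<open>nrm r \<le> C\<close> show ?thesis by fastforce
  qed
  have Tsub: "T M \<subseteq> T N" if "N \<le> M" for N M
  proof -
    have "1 / real (Suc M) \<le> 1 / real (Suc N)" using that by (simp add: frac_le)
    thus ?thesis unfolding T_def by force
  qed
  have dmono: "d N \<le> d M" if "N \<le> M" for N M
    unfolding d_def using ne[of M] bb[of N] Tsub[OF that] by (intro cInf_superset_mono) auto
  have Tmid: "rmid r1 r2 \<in> T N" if "r1 \<in> T N" "r2 \<in> T N" for r1 r2 N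
  proof -
    have G: "Good r1" "Good r2" using that unfolding T_def by auto
    have "\<bar>rv (rmid r1 r2) g - u g\<bar> \<le> 1 / real (Suc N)" if g: "g \<in> G0" for g
    proof -
      have a: "\<bar>rv r1 g - u g\<bar> \<le> 1 / real (Suc N)" "\<bar>rv r2 g - u g\<bar> \<le> 1 / real (Suc N)"
        using \<open>r1 \<in> T N\<close> \<open>r2 \<in> T N\<close> g unfolding T_def by auto
      have "rv (rmid r1 r2) g - u g = ((rv r1 g - u g) + (rv r2 g - u g)) / 2"
        using Good_mid(2)[OF G] by (simp add: field_simps)
      hence "\<bar>rv (rmid r1 r2) g - u g\<bar> = \<bar>((rv r1 g - u g) + (rv r2 g - u g)) / 2\<bar>" by (simp only:)
      also have "\<dots> = \<bar>(rv r1 g - u g) + (rv r2 g - u g)\<bar> / 2" by simp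
      also have "\<dots> \<le> (\<bar>rv r1 g - u g\<bar> + \<bar>rv r2 g - u g\<bar>) / 2"
        by (intro divide_right_mono abs_triangle_ineq) auto
      also have "\<dots> \<le> 1 / real (Suc N)" using avg_le[OF a] .
      finally show ?thesis .
    qed
    thus ?thesis using Good_mid(1)[OF G] unfolding T_def by auto
  qed
  define dd where "dd = Sup (range d)"
  have bda: "bdd_above (range d)" using dC by (intro bdd_aboveI[of _ C]) auto
  have ddu: "d N \<le> dd" for N unfolding dd_def using bda by (intro cSup_upper) auto
  have ddl: "\<exists>L. dd - e < d L" if "e > 0" for e
  proof -
    have "dd - e < Sup (range d)" using that unfolding dd_def by simp
    hence "\<exists>x\<in>range d. dd - e < x" by (rule less_cSupD[rotated]) simp
    thus ?thesis by auto
  qed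
  have "\<forall>N. \<exists>r. r \<in> T N \<and> nrm r < d N + 1 / real (Suc N)"
  proof
    fix N
    have "Inf (nrm ` T N) < d N + 1 / real (Suc N)" unfolding d_def by simp
    hence "\<exists>x\<in>nrm ` T N. x < d N + 1 / real (Suc N)" by (rule cInf_lessD[rotated]) (simp add: ne)
    thus "\<exists>r. r \<in> T N \<and> nrm r < d N + 1 / real (Suc N)" by auto
  qed
  then obtain rr where rr0: "\<forall>N. rr N \<in> T N \<and> nrm (rr N) < d N + 1 / real (Suc N)" by (rule choice[THEN exE])
  hence rr: "\<And>N. rr N \<in> T N" "\<And>N. nrm (rr N) < d N + 1 / real (Suc N)" by auto
  have Grr: "Good (rr N)" for N using rr(1) unfolding T_def by auto
  have key: "dst (rr N) (rr K) \<le> 4 * (dd - d L) + 4 / real (Suc L)" if "L \<le> N" "L \<le> K" for N K L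
  proof -
    have "rr N \<in> T L" "rr K \<in> T L" using rr(1) Tsub that by blast+
    hence "d L \<le> nrm (rmid (rr N) (rr K))" using Tmid dle by blast
    moreover have "nrm (rr N) \<le> dd + 1 / real (Suc L)"
    proof -
      have "1 / real (Suc N) \<le> 1 / real (Suc L)" using that by (simp add: frac_le)
      thus ?thesis using rr(2)[of N] ddu[of N] by linarith
    qed
    moreover have "nrm (rr K) \<le> dd + 1 / real (Suc L)"
    proof -
      have "1 / real (Suc K) \<le> 1 / real (Suc L)" using that by (simp add: frac_le)
      thus ?thesis using rr(2)[of K] ddu[of K] by linarith
    qed
    ultimately have "dst (rr N) (rr K) \<le> 4 * (dd - d L) + 4 * (1 / real (Suc L))"
      using parallelogram[OF Grr Grr, of N K] by (intro lin4) auto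
    thus ?thesis by simp
  qed
  show ?thesis unfolding Dom_E_def mem_Collect_eq
  proof (intro conjI exI[of _ "\<lambda>n. fst (rr n)"] exI[of _ "\<lambda>n. fst (snd (rr n))"] exI[of _ "\<lambda>n. snd (snd (rr n))"])
    show "u \<in> borel_measurable Q" by (rule um)
    have "(\<integral>\<^sup>+ g. ennreal ((u g)\<^sup>2) \<partial>Q) \<le> (\<integral>\<^sup>+ g. ennreal 1 \<partial>Q)"
    proof (rule nn_integral_mono)
      fix g assume "g \<in> space Q"
      hence "\<bar>u g\<bar> \<le> 1" using ub sp by auto
      hence "\<bar>u g\<bar>\<^sup>2 \<le> 1\<^sup>2" by (intro power_mono) auto
      thus "ennreal ((u g)\<^sup>2) \<le> ennreal 1" by (intro ennreal_leI) simp
    qed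
    also have "\<dots> = 1" by (simp add: emeasure_space_1)
    finally show "(\<integral>\<^sup>+ g. ennreal ((u g)\<^sup>2) \<partial>Q) < \<infinity>" by (simp add: le_less_trans)
    show "\<forall>n. Z1_rep (fst (rr n)) (fst (snd (rr n))) (snd (snd (rr n)))" using Grr unfolding Good_def by auto
    have up: "(\<integral>\<^sup>+ g. ennreal ((z1_fun (fst (rr n)) (fst (snd (rr n))) (snd (snd (rr n))) g - u g)\<^sup>2) \<partial>Q)
        \<le> ennreal (inverse (real (Suc n)))" for n
    proof -
      have "(\<integral>\<^sup>+ g. ennreal ((z1_fun (fst (rr n)) (fst (snd (rr n))) (snd (snd (rr n))) g - u g)\<^sup>2) \<partial>Q)
          \<le> (\<integral>\<^sup>+ g. ennreal (inverse (real (Suc n))) \<partial>Q)"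
      proof (rule nn_integral_mono)
        fix g assume "g \<in> space Q"
        hence a: "\<bar>rv (rr n) g - u g\<bar> \<le> 1 / real (Suc n)" using rr(1)[of n] sp unfolding T_def by auto
        have b: "1 / real (Suc n) \<le> 1" by simp
        have a1: "\<bar>rv (rr n) g - u g\<bar> \<le> 1" using a b by (smt (verit))
        have "\<bar>rv (rr n) g - u g\<bar>\<^sup>2 \<le> \<bar>rv (rr n) g - u g\<bar> * 1"
          unfolding power2_eq_square using a1 by (intro mult_left_mono) auto
        also have "\<dots> \<le> inverse (real (Suc n))" using a by (simp add: inverse_eq_divide)
        finally show "ennreal ((z1_fun (fst (rr n)) (fst (snd (rr n))) (snd (snd (rr n))) g - u g)\<^sup>2) \<le> ennreal (inverse (real (Suc n)))"
          by (intro ennreal_leI) (simp add: rv_def)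
      qed
      also have "\<dots> = ennreal (inverse (real (Suc n)))" by (simp add: emeasure_space_1)
      finally show ?thesis .
    qed
    have "(\<lambda>n. ennreal (inverse (real (Suc n)))) \<longlonglongrightarrow> ennreal 0"
      by (intro tendsto_ennrealI LIMSEQ_inverse_real_of_nat)
    hence lim: "(\<lambda>n. ennreal (inverse (real (Suc n)))) \<longlonglongrightarrow> 0" by simp
    show "(\<lambda>n. \<integral>\<^sup>+ g. ennreal ((z1_fun (fst (rr n)) (fst (snd (rr n))) (snd (snd (rr n))) g - u g)\<^sup>2) \<partial>Q) \<longlonglongrightarrow> 0"
      by (rule tendsto_sandwich[OF _ _ tendsto_const lim]) (simp, intro always_eventually allI up)
    show "\<forall>\<epsilon>>0. \<exists>N. \<forall>n\<ge>N. \<forall>k\<ge>N. (\<integral>\<^sup>+ g. ennreal (integral {0..1}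
               (\<lambda>t. (z1_grad (fst (rr n)) (fst (snd (rr n))) (snd (snd (rr n))) g t
                  - z1_grad (fst (rr k)) (fst (snd (rr k))) (snd (snd (rr k))) g t)\<^sup>2)) \<partial>Q) < \<epsilon>"
    proof (intro allI impI)
      fix \<epsilon> :: ennreal assume "\<epsilon> > 0"
      obtain e where e: "e > 0" "ennreal e \<le> \<epsilon>"
      proof (cases "\<epsilon> = \<top>")
        case True thus ?thesis using that[of 1] by auto
      next
        case False
        then obtain r where r: "\<epsilon> = ennreal r" "0 \<le> r" by (cases \<epsilon>) auto
        hence "0 < r" using \<open>\<epsilon> > 0\<close> by simp
        thus ?thesis using that[of r] r by simp
      qed
      obtain L1 where L1: "dd - e / 8 < d L1" using ddl[of "e/8"] e by auto
      obtain L2 :: nat where L2: "8 / e < real L2" using reals_Archimedean2 by blast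
      define L where "L = max L1 L2"
      have "d L1 \<le> d L" unfolding L_def by (intro dmono) auto
      hence dL: "dd - d L < e / 8" using L1 by linarith
      have "4 / real (Suc L) < e / 2"
      proof -
        have "8 / e < real (Suc L)" using L2 unfolding L_def by auto
        hence "8 < e * real (Suc L)" using e(1) by (simp add: field_simps)
        thus ?thesis using e(1) by (simp add: field_simps)
      qed
      show "\<exists>N. \<forall>n\<ge>N. \<forall>k\<ge>N. (\<integral>\<^sup>+ g. ennreal (integral {0..1}
               (\<lambda>t. (z1_grad (fst (rr n)) (fst (snd (rr n))) (snd (snd (rr n))) g t
                  - z1_grad (fst (rr k)) (fst (snd (rr k))) (snd (snd (rr k))) g t)\<^sup>2)) \<partial>Q) < \<epsilon>"
      proof (intro exI[of _ L] allI impI)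
        fix n k assume nk: "L \<le> n" "L \<le> k"
        have h1: "8 * (dd - d L) < e" using dL by (simp add: field_simps)
        have h2: "2 * (4 / real (Suc L)) < e" using \<open>4 / real (Suc L) < e / 2\<close> by (simp add: field_simps)
        have "dst (rr n) (rr k) < e" using key[OF nk] h1 h2 by linarith
        hence "ennreal (dst (rr n) (rr k)) < ennreal e" using e(1) by (intro ennreal_lessI) auto
        also have "\<dots> \<le> \<epsilon>" by (rule e(2))
        finally have calc: "ennreal (dst (rr n) (rr k)) < \<epsilon>" .
        show "(\<integral>\<^sup>+ g. ennreal (integral {0..1}
               (\<lambda>t. (z1_grad (fst (rr n)) (fst (snd (rr n))) (snd (snd (rr n))) g t
                  - z1_grad (fst (rr k)) (fst (snd (rr k))) (snd (snd (rr k))) g t)\<^sup>2)) \<partial>Q) < \<epsilon>"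
          using dst_nn[OF Grr Grr, of n k] calc unfolding rg_def by simp
      qed
    qed
  qed
qed

end

definition rho :: "real \<Rightarrow> real" where "rho z = 6 * max 0 (z * (1 - z))"

lemma rho_cont: "continuous_on UNIV rho"
  unfolding rho_def by (intro continuous_intros)

lemma rho_nonneg: "0 \<le> rho z" unfolding rho_def by simp

lemma rho_zero: "z \<le> 0 \<or> 1 \<le> z \<Longrightarrow> rho z = 0"
proof -
  assume "z \<le> 0 \<or> 1 \<le> z"
  hence "z * (1 - z) \<le> 0" by (auto simp: mult_nonpos_nonneg mult_nonneg_nonpos)
  thus "rho z = 0" unfolding rho_def by simp
qed

lemma rho_le: "rho z \<le> 3 / 2"
proof -
  have "z * (1 - z) = 1/4 - (z - 1/2)\<^sup>2" by (simp add: power2_eq_square field_simps)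
  hence "z * (1 - z) \<le> 1/4" by simp
  thus ?thesis unfolding rho_def by simp
qed

lemma window_deriv:
  fixes h :: "real \<Rightarrow> real"
  assumes hc: "continuous_on UNIV h" and L: "0 \<le> L"
  shows "((\<lambda>y. integral {y - L..y} h) has_real_derivative (h y - h (y - L))) (at y)"
proof -
  define a where "a = y - L - 1"
  define b where "b = y + 1"
  have hab: "continuous_on {a..b} h" using hc by (rule continuous_on_subset) auto
  have F: "((\<lambda>x. integral {a..x} h) has_real_derivative h x) (at x)" if "a < x" "x < b" for x
    using integral_has_real_derivative[OF hab, of x] that at_within_Icc_at[OF that] by auto
  have d1: "((\<lambda>x. integral {a..x} h) has_real_derivative h y) (at y)"
    by (rule F) (use L in \<open>auto simp: a_def b_def\<close>)
  have d2: "((\<lambda>x. integral {a..x - L} h) has_real_derivative h (y - L) * 1) (at y)"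
    by (rule DERIV_chain2[of "\<lambda>x. integral {a..x} h", OF F]) (use L in \<open>auto simp: a_def b_def intro!: derivative_eq_intros\<close>)
  have d: "((\<lambda>x. integral {a..x} h - integral {a..x - L} h) has_real_derivative (h y - h (y - L))) (at y)"
    using DERIV_diff[OF d1 d2] by simp
  show ?thesis
  proof (rule has_field_derivative_transform_within_open[OF d, of "ball y 1"])
    fix z assume "z \<in> ball y 1"
    hence z: "a \<le> z - L" "z - L \<le> z" using L by (auto simp: a_def dist_real_def)
    have "h integrable_on {a..z}" using hc by (intro integrable_continuous_real continuous_on_subset[OF hc]) auto
    hence "integral {a..z - L} h + integral {z - L..z} h = integral {a..z} h"
      by (rule Henstock_Kurzweil_Integration.integral_combine[OF z])
    thus "integral {a..z} h - integral {a..z - L} h = integral {z - L..z} h" by simp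
  qed auto
qed

definition psi :: "real \<Rightarrow> real \<Rightarrow> real" where "psi L z = integral {z - L..z} rho"

lemma psi_deriv: "0 \<le> L \<Longrightarrow> (psi L has_real_derivative (rho z - rho (z - L))) (at z)"
  unfolding psi_def[abs_def] by (rule window_deriv[OF rho_cont])

lemma psi_cont: "0 \<le> L \<Longrightarrow> continuous_on S (psi L)"
  using psi_deriv by (meson DERIV_isCont continuous_at_imp_continuous_on)

lemma psi_zero: "z \<le> 0 \<Longrightarrow> psi L z = 0"
proof -
  assume z: "z \<le> 0"
  have "integral {z - L..z} rho = integral {z - L..z} (\<lambda>_. 0::real)"
    by (rule integral_cong) (use z in \<open>auto intro: rho_zero\<close>)
  thus ?thesis unfolding psi_def by simp
qed

lemma rho_int01: "integral {0..1} rho = 1"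
proof -
  have "((\<lambda>t. 6 * t - 6 * t\<^sup>2) has_integral ((\<lambda>t. 3 * t\<^sup>2 - 2 * t ^ 3) 1 - (\<lambda>t. 3 * t\<^sup>2 - 2 * t ^ 3) 0)) {0..1::real}"
    by (rule fundamental_theorem_of_calculus)
       (auto intro!: derivative_eq_intros simp: has_real_derivative_iff_has_vector_derivative[symmetric] power2_eq_square)
  hence "integral {0..1} (\<lambda>t::real. 6 * t - 6 * t\<^sup>2) = 1" by (simp add: integral_unique)
  moreover have "integral {0..1} rho = integral {0..1} (\<lambda>t::real. 6 * t - 6 * t\<^sup>2)"
  proof (rule integral_cong)
    fix t :: real assume "t \<in> {0..1}"
    hence "0 \<le> t * (1 - t)" by simp
    thus "rho t = 6 * t - 6 * t\<^sup>2" unfolding rho_def by (simp add: power2_eq_square algebra_simps)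
  qed
  ultimately show ?thesis by simp
qed

lemma psi_one: assumes "1 \<le> L" shows "psi L 1 = 1"
proof -
  have "rho integrable_on {1 - L..1}" by (intro integrable_continuous_real continuous_on_subset[OF rho_cont]) auto
  hence "integral {1 - L..0} rho + integral {0..1} rho = integral {1 - L..1} rho"
    by (intro Henstock_Kurzweil_Integration.integral_combine[of "1 - L" 0 1 rho]) (use assms in auto)
  moreover have "integral {1 - L..0} rho = integral {1 - L..0} (\<lambda>_. 0::real)"
    by (rule integral_cong) (auto intro: rho_zero)
  ultimately show ?thesis unfolding psi_def using rho_int01 by simp
qed

lemma psi_mono: assumes L: "0 \<le> L" and ab: "a \<le> b" "b \<le> L" shows "psi L a \<le> psi L b"
proof (rule DERIV_nonneg_imp_increasing_open[OF ab(1)])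
  fix x assume x: "a < x" "x < b"
  have "rho (x - L) = 0" using x ab by (intro rho_zero) auto
  thus "\<exists>y. DERIV (psi L) x :> y \<and> 0 \<le> y" using psi_deriv[OF L, of x] rho_nonneg[of x] by auto
qed (rule psi_cont[OF L])

lemma psi_top: assumes L: "1 \<le> L" and z: "1 \<le> z" "z \<le> L" shows "psi L z = 1"
proof -
  have "psi L z = psi L 1"
  proof (cases "z = 1")
    case False
    hence "1 < z" using z by auto
    thus ?thesis
    proof (rule DERIV_isconst2[of 1 z "psi L" z])
      show "continuous_on {1..z} (psi L)" using psi_cont L by auto
      fix x assume x: "1 < x" "x < z"
      have "rho (x - L) = 0" "rho x = 0" using x z by (auto intro: rho_zero)
      thus "DERIV (psi L) x :> 0" using psi_deriv[of L x] L by auto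
    qed (use z in auto)
  qed simp
  thus ?thesis using psi_one[OF L] by simp
qed

lemma psi_bounds: assumes L: "1 \<le> L" and z: "z \<le> L" shows "0 \<le> psi L z" "psi L z \<le> 1"
proof -
  show "0 \<le> psi L z"
  proof (cases "z \<le> 0")
    case True thus ?thesis using psi_zero by simp
  next
    case False thus ?thesis using psi_mono[of L 0 z] psi_zero[of 0 L] L z by auto
  qed
  show "psi L z \<le> 1"
  proof (cases "z \<le> 1")
    case True thus ?thesis using psi_mono[of L z 1] psi_one[OF L] L by auto
  next
    case False thus ?thesis using psi_top[OF L, of z] z by auto
  qed
qed

lemma G0_borel: assumes g: "g \<in> G0" shows "g \<in> borel_measurable borel"
proof -
  define c where "c t = max 0 (min 1 t)" for t :: real
  have "mono (\<lambda>t. g (c t))"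
    by (rule monoI) (auto simp: c_def intro!: G0_mono[OF g])
  hence m: "(\<lambda>t. g (c t)) \<in> borel_measurable borel" by (rule borel_measurable_mono)
  have "(\<lambda>t. indicator {0..1} t * g (c t)) \<in> borel_measurable borel"
    by (intro borel_measurable_times m) auto
  moreover have "(\<lambda>t. indicator {0..1} t * g (c t)) = g"
  proof
    fix t show "indicator {0..1} t * g (c t) = g t"
      using g unfolding c_def G0_def by (cases "t \<in> {0..1}") auto
  qed
  ultimately show ?thesis by simp
qed

lemma bint:
  fixes h :: "real \<Rightarrow> real"
  assumes "h \<in> borel_measurable borel" "\<And>t. t \<in> {0..1} \<Longrightarrow> \<bar>h t\<bar> \<le> B"
  shows "h integrable_on {0..1}"
proof -
  have "set_integrable lborel {0..1} h" unfolding set_integrable_def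
    by (rule integrableI_bounded_set_indicator[where B=B]) (use assms in auto)
  thus ?thesis by (rule set_borel_integral_eq_integral(1))
qed

lemma int_bound01:
  fixes h :: "real \<Rightarrow> real"
  assumes "h integrable_on {0..1}" "\<And>t. t \<in> {0..1} \<Longrightarrow> \<bar>h t\<bar> \<le> B"
  shows "\<bar>integral {0..1} h\<bar> \<le> B"
proof -
  have B0: "0 \<le> B" using assms(2)[of 0] by auto
  have "norm (integral (cbox 0 1) h) \<le> B * Henstock_Kurzweil_Integration.content (cbox 0 (1::real))"
    by (rule has_integral_bound[OF B0]) (use assms in \<open>auto simp: has_integral_integral\<close>)
  thus ?thesis by simp
qed

definition Psi :: "(real \<Rightarrow> real) \<Rightarrow> real \<Rightarrow> real" where
  "Psi f y = integral {0..1} (\<lambda>t. f t * indicator {y..} t)"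
definition Psis :: "(real \<Rightarrow> real) \<Rightarrow> nat \<Rightarrow> real \<Rightarrow> real" where
  "Psis f n y = real n * integral {y..y + 1 / real n} (Psi f)"
definition Psid :: "(real \<Rightarrow> real) \<Rightarrow> nat \<Rightarrow> real \<Rightarrow> real" where
  "Psid f n y = real n * (Psi f (y + 1 / real n) - Psi f y)"

lemma f_ind_meas: assumes f: "f \<in> G0" "S \<in> sets borel"
  shows "(\<lambda>t. f t * indicator S t) \<in> borel_measurable borel"
  using G0_borel[OF f(1)] f(2) by (intro borel_measurable_times) auto

lemma f_ind_int: assumes f: "f \<in> G0" "S \<in> sets borel"
  shows "(\<lambda>t. f t * indicator S t) integrable_on {0..1}"
  by (rule bint[OF f_ind_meas[OF f], of 1]) (use G0_bounds[OF f(1)] in \<open>auto simp: indicator_def\<close>)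

lemma Psi_lip1:
  assumes f: "f \<in> G0" and yy: "y \<le> y'"
  shows "0 \<le> Psi f y - Psi f y'" "Psi f y - Psi f y' \<le> y' - y"
proof -
  have i1: "(\<lambda>t. f t * indicator {y..} t) integrable_on {0..1}" using f_ind_int[OF f] by auto
  have i2: "(\<lambda>t. f t * indicator {y'..} t) integrable_on {0..1}" using f_ind_int[OF f] by auto
  have e: "Psi f y - Psi f y' = integral {0..1} (\<lambda>t. f t * indicator {y..} t - f t * indicator {y'..} t)"
    unfolding Psi_def by (rule integral_diff[OF i1 i2, symmetric])
  have pw: "0 \<le> f t * indicator {y..} t - f t * indicator {y'..} t"
           "f t * indicator {y..} t - f t * indicator {y'..} t \<le> (if t \<in> {y..y'} then 1 else 0)" for t
    using G0_bounds[OF f, of t] yy by (auto simp: indicator_def)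
  have id: "(\<lambda>t. f t * indicator {y..} t - f t * indicator {y'..} t) integrable_on {0..1}"
    by (rule integrable_diff[OF i1 i2])
  show "0 \<le> Psi f y - Psi f y'" unfolding e by (rule integral_nonneg[OF id]) (use pw in auto)
  have ii: "(\<lambda>t. if t \<in> {y..y'} then 1 else 0 :: real) integrable_on {0..1}"
    by (rule bint[of _ 1]) (auto simp: borel_measurable_if_I)
  have "Psi f y - Psi f y' \<le> integral {0..1} (\<lambda>t. if t \<in> {y..y'} then 1 else 0 :: real)"
    unfolding e by (rule integral_le[OF id ii]) (use pw in auto)
  also have "\<dots> = integral ({y..y'} \<inter> {0..1}) (\<lambda>_. 1::real)" by (rule integral_restrict_Int)
  also have "\<dots> = integral {max y 0..min y' 1} (\<lambda>_. 1::real)"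
    by (intro arg_cong2[where f=integral] refl) auto
  also have "\<dots> \<le> y' - y" using yy by (simp; linarith)
  finally show "Psi f y - Psi f y' \<le> y' - y" .
qed

lemma Psi_lip: assumes f: "f \<in> G0" shows "\<bar>Psi f y - Psi f y'\<bar> \<le> \<bar>y - y'\<bar>"
proof (cases "y \<le> y'")
  case True thus ?thesis using Psi_lip1[OF f True] by simp
next
  case False hence yy: "y' \<le> y" by simp
  show ?thesis using Psi_lip1[OF f yy] by simp
qed

lemma Psi_cont: assumes f: "f \<in> G0" shows "continuous_on S (Psi f)"
proof (rule lipschitz_on_continuous_on)
  show "1-lipschitz_on S (Psi f)"
    by (rule lipschitz_onI) (use Psi_lip[OF f] in \<open>auto simp: dist_real_def\<close>)
qed

lemma Psis_deriv: assumes f: "f \<in> G0" and n: "0 < n"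
  shows "(Psis f n has_real_derivative Psid f n y) (at y)"
proof -
  define h where "h = 1 / real n"
  have h0: "0 \<le> h" unfolding h_def by simp
  have W: "((\<lambda>z. integral {z - h..z} (Psi f)) has_real_derivative (Psi f (y + h) - Psi f (y + h - h))) (at (y + h))"
    by (rule window_deriv[OF Psi_cont[OF f] h0])
  have "((\<lambda>y. integral {(y + h) - h..y + h} (Psi f)) has_real_derivative (Psi f (y + h) - Psi f (y + h - h)) * 1) (at y)"
    by (rule DERIV_chain2[where f="\<lambda>z. integral {z - h..z} (Psi f)" and g="\<lambda>y. y + h", OF W]) (auto intro!: derivative_eq_intros)
  hence "((\<lambda>y. integral {y..y + h} (Psi f)) has_real_derivative (Psi f (y + h) - Psi f y)) (at y)" by simp
  hence "((\<lambda>y. real n * integral {y..y + h} (Psi f)) has_real_derivative real n * (Psi f (y + h) - Psi f y)) (at y)"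
    by (rule DERIV_cmult)
  thus ?thesis unfolding Psis_def[abs_def] Psid_def h_def .
qed

lemma Psid_cont: assumes f: "f \<in> G0" shows "continuous_on S (Psid f n)"
  unfolding Psid_def[abs_def]
  by (intro continuous_intros continuous_on_compose2[OF Psi_cont[OF f, of UNIV]]) auto

lemma Psid_bound: assumes f: "f \<in> G0" and n: "0 < n" shows "\<bar>Psid f n y\<bar> \<le> 1"
proof -
  have "\<bar>Psi f (y + 1 / real n) - Psi f y\<bar> \<le> 1 / real n" using Psi_lip[OF f, of "y + 1 / real n" y] by simp
  hence "real n * \<bar>Psi f (y + 1 / real n) - Psi f y\<bar> \<le> real n * (1 / real n)" by (intro mult_left_mono) auto
  thus ?thesis using n unfolding Psid_def by (simp add: abs_mult)
qed

lemma Psis_approx: assumes f: "f \<in> G0" and n: "0 < n" shows "\<bar>Psis f n y - Psi f y\<bar> \<le> 1 / real n"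
proof -
  define h where "h = 1 / real n"
  have h0: "0 < h" using n unfolding h_def by simp
  have nh: "real n * h = 1" using n unfolding h_def by simp
  have ip: "Psi f integrable_on {y..y + h}" by (intro integrable_continuous_real Psi_cont[OF f])
  have ic: "(\<lambda>_. Psi f y) integrable_on {y..y + h}" by (intro integrable_continuous_real continuous_on_const)
  have J: "integral {y..y + h} (Psi f) = h * Psi f y + integral {y..y + h} (\<lambda>s. Psi f s - Psi f y)"
    using integral_diff[OF ip ic] h0 by simp
  have "Psis f n y = real n * (h * Psi f y) + real n * integral {y..y + h} (\<lambda>s. Psi f s - Psi f y)"
    unfolding Psis_def h_def[symmetric] J by (simp add: distrib_left)
  also have "real n * (h * Psi f y) = Psi f y" using nh by (simp add: mult.assoc[symmetric])
  finally have e: "Psis f n y - Psi f y = real n * integral {y..y + h} (\<lambda>s. Psi f s - Psi f y)" by simp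
  have "norm (integral (cbox y (y + h)) (\<lambda>s. Psi f s - Psi f y)) \<le> h * Henstock_Kurzweil_Integration.content (cbox y (y + h))"
  proof (rule has_integral_bound)
    show "0 \<le> h" using h0 by simp
    show "((\<lambda>s. Psi f s - Psi f y) has_integral integral (cbox y (y + h)) (\<lambda>s. Psi f s - Psi f y)) (cbox y (y + h))"
      using integrable_diff[OF ip ic] by (simp add: has_integral_integral)
    fix s assume "s \<in> cbox y (y + h)"
    thus "norm (Psi f s - Psi f y) \<le> h" using Psi_lip[OF f, of s y] by auto
  qed
  hence "\<bar>integral {y..y + h} (\<lambda>s. Psi f s - Psi f y)\<bar> \<le> h * h" using h0 by simp
  hence "real n * \<bar>integral {y..y + h} (\<lambda>s. Psi f s - Psi f y)\<bar> \<le> real n * (h * h)" by (intro mult_left_mono) auto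
  also have "\<dots> = h" using nh by (simp add: algebra_simps)
  finally show ?thesis unfolding e h_def by (simp add: abs_mult)
qed

definition alpha :: "nat \<Rightarrow> nat \<Rightarrow> real \<Rightarrow> real" where
  "alpha n i x = psi (real n + 1) (real i + 1 - real n * x)"
definition Gv :: "nat \<Rightarrow> (real \<Rightarrow> real) \<Rightarrow> nat \<Rightarrow> real" where
  "Gv n g i = integral {0..1} (\<lambda>s. alpha n i (g s))"
definition Uf :: "(real \<Rightarrow> real) \<Rightarrow> nat \<Rightarrow> (nat \<Rightarrow> real) \<Rightarrow> real" where
  "Uf f n y = (\<Sum>j<n. Psis f n (y j)) / real n"

lemma alpha_cont: "continuous_on S (alpha n i)"
  unfolding alpha_def[abs_def]
  by (intro continuous_on_compose2[OF psi_cont[of "real n + 1" UNIV]] continuous_intros) auto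

lemma alpha_bounds: assumes "0 \<le> x" "i < n" shows "0 \<le> alpha n i x" "alpha n i x \<le> 1"
proof -
  have "real i + 1 - real n * x \<le> real n + 1" using assms by (smt (verit) mult_nonneg_nonneg of_nat_0_le_iff of_nat_less_iff)
  thus "0 \<le> alpha n i x" "alpha n i x \<le> 1" unfolding alpha_def by (auto intro: psi_bounds)
qed

lemma alpha_one: assumes "0 \<le> x" "i < n" "real n * x \<le> real i" shows "alpha n i x = 1"
proof -
  have "real i + 1 - real n * x \<le> real n + 1" using assms by (smt (verit) mult_nonneg_nonneg of_nat_0_le_iff of_nat_less_iff)
  moreover have "1 \<le> real i + 1 - real n * x" using assms by simp
  ultimately show ?thesis unfolding alpha_def by (intro psi_top) auto
qed

lemma alpha_zero: assumes "real i + 1 \<le> real n * x" shows "alpha n i x = 0"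
  unfolding alpha_def using assms by (intro psi_zero) simp

lemma alpha_g_meas: assumes g: "g \<in> G0" shows "(\<lambda>s. alpha n i (g s)) \<in> borel_measurable borel"
  using measurable_compose[OF G0_borel[OF g] borel_measurable_continuous_onI[OF alpha_cont]] by simp

lemma alpha_g_int: assumes g: "g \<in> G0" "i < n" shows "(\<lambda>s. alpha n i (g s)) integrable_on {0..1}"
  by (rule bint[OF alpha_g_meas[OF g(1)], where B=1]) (use alpha_bounds G0_bounds[OF g(1)] g(2) in auto)

lemma ind_int: assumes "0 \<le> a" "a \<le> 1"
  shows "(\<lambda>s. if s \<in> {0..a} then 1 else 0 :: real) integrable_on {0..1}"
    "integral {0..1} (\<lambda>s. if s \<in> {0..a} then 1 else 0 :: real) = a"
proof -
  show "(\<lambda>s. if s \<in> {0..a} then 1 else 0 :: real) integrable_on {0..1}"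
    by (rule bint[of _ 1]) (auto simp: borel_measurable_if_I)
  have "integral {0..1} (\<lambda>s. if s \<in> {0..a} then 1 else 0 :: real) = integral ({0..a} \<inter> {0..1}) (\<lambda>_. 1::real)"
    by (rule integral_restrict_Int)
  also have "{0..a} \<inter> {0..1} = {0..a}" using assms by auto
  finally show "integral {0..1} (\<lambda>s. if s \<in> {0..a} then 1 else 0 :: real) = a" using assms by simp
qed

lemma Ga: assumes g: "g \<in> G0" and t: "0 \<le> t" "t \<le> 1" and i: "i < n" and x: "real i + 2 \<le> real n * g t"
  shows "Gv n g i \<le> t"
proof -
  have "Gv n g i \<le> integral {0..1} (\<lambda>s. if s \<in> {0..t} then 1 else 0 :: real)"
    unfolding Gv_def
  proof (rule integral_le[OF alpha_g_int[OF g i] ind_int(1)[OF t]])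
    fix s assume s: "s \<in> {0..1::real}"
    show "alpha n i (g s) \<le> (if s \<in> {0..t} then 1 else 0)"
    proof (cases "s \<le> t")
      case True thus ?thesis using alpha_bounds[OF G0_bounds(1)[OF g] i] s by auto
    next
      case False
      hence "g t \<le> g s" using s t by (intro G0_mono[OF g]) auto
      hence "real n * g t \<le> real n * g s" by (intro mult_left_mono) auto
      hence "alpha n i (g s) = 0" using x by (intro alpha_zero) auto
      thus ?thesis by simp
    qed
  qed
  thus ?thesis using ind_int(2)[OF t] by simp
qed

lemma Gb: assumes g: "g \<in> G0" and t: "0 \<le> t" "t \<le> 1" and i: "i < n" and x: "real n * g t < real i"
  shows "t < Gv n g i"
proof -
  have t1: "t < 1"
  proof (rule ccontr)
    assume "\<not> t < 1" hence "t = 1" using t by auto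
    hence "g t = 1" using G0_one[OF g] by simp
    thus False using x i by simp
  qed
  have n0: "0 < n" using i by simp
  have lt: "g t < real i / real n" using x n0 by (simp add: field_simps)
  have "continuous (at_right t) g" using G0_rc[OF g t(1) t1] .
  hence "(g \<longlongrightarrow> g t) (at_right t)" by (simp add: continuous_within)
  hence "eventually (\<lambda>s. g s < real i / real n) (at_right t)" using lt by (rule order_tendstoD(2))
  then obtain b where b: "b > t" "\<And>s. s > t \<Longrightarrow> s < b \<Longrightarrow> g s < real i / real n"
    unfolding eventually_at_right_field by auto
  define t' where "t' = min ((t + b) / 2) 1"
  have tb: "t < (t + b) / 2" "(t + b) / 2 < b" using b(1) by (simp_all add: field_simps)
  have t'b: "t' < b" unfolding t'_def by (rule le_less_trans[OF min.cobounded1 tb(2)])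
  have t': "t < t'" "t' \<le> 1" "t' < b" "0 \<le> t'" using tb t1 t t'b unfolding t'_def by auto
  have "integral {0..1} (\<lambda>s. if s \<in> {0..t'} then 1 else 0 :: real) \<le> Gv n g i"
    unfolding Gv_def
  proof (rule integral_le[OF ind_int(1) alpha_g_int[OF g i]])
    show "0 \<le> t'" "t' \<le> 1" using t' by auto
    fix s assume s: "s \<in> {0..1::real}"
    show "(if s \<in> {0..t'} then 1 else 0) \<le> alpha n i (g s)"
    proof (cases "s \<le> t'")
      case True
      have "real n * g s \<le> real i"
      proof (cases "s \<le> t")
        case True
        hence "g s \<le> g t" using s t by (intro G0_mono[OF g]) auto
        hence "real n * g s \<le> real n * g t" by (intro mult_left_mono) auto
        thus ?thesis using x by simp
      next
        case False
        hence "g s < real i / real n" using b(2)[of s] True t' by auto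
        thus ?thesis using n0 by (simp add: field_simps)
      qed
      hence "alpha n i (g s) = 1" using alpha_one[OF G0_bounds(1)[OF g] i] by auto
      thus ?thesis by simp
    next
      case False thus ?thesis using alpha_bounds[OF G0_bounds(1)[OF g] i] by auto
    qed
  qed
  thus ?thesis using ind_int(2)[of t'] t' by simp
qed

lemma cnt_lo: "min (real n) (x - 2) \<le> (\<Sum>j<n. if real j + 2 \<le> x then 1 else 0 :: real)"
proof (induction n)
  case 0 thus ?case by simp
next
  case (Suc n)
  show ?case
  proof (cases "real n + 2 \<le> x")
    case True
    hence "min (real n) (x - 2) = real n" by simp
    thus ?thesis using Suc True by simp
  next
    case False
    hence "min (real (Suc n)) (x - 2) \<le> min (real n) (x - 2)" by simp
    thus ?thesis using Suc False by simp
  qed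
qed

lemma cnt_hi: "0 \<le> x \<Longrightarrow> (\<Sum>j<n. if real j \<le> x then 1 else 0 :: real) \<le> min (real n) (x + 1)"
proof (induction n)
  case 0 thus ?case by simp
next
  case (Suc n)
  show ?case
  proof (cases "real n \<le> x")
    case True
    thus ?thesis using Suc by simp
  next
    case False
    thus ?thesis using Suc by simp
  qed
qed

lemma S_bounds:
  assumes g: "g \<in> G0" and t: "0 \<le> t" "t \<le> 1" and n: "0 < n"
  shows "real n * g t - 2 \<le> (\<Sum>j<n. indicator {Gv n g j..} t :: real)"
    "(\<Sum>j<n. indicator {Gv n g j..} t :: real) \<le> real n * g t + 1"
proof -
  define x where "x = real n * g t"
  have x0: "0 \<le> x" unfolding x_def using G0_bounds[OF g] by simp
  have xn: "x \<le> real n" unfolding x_def using G0_bounds(2)[OF g, of t] by (simp add: mult_left_le)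
  have "x - 2 \<le> (\<Sum>j<n. if real j + 2 \<le> x then 1 else 0 :: real)"
    using cnt_lo[of n x] xn by simp
  also have "\<dots> \<le> (\<Sum>j<n. indicator {Gv n g j..} t :: real)"
  proof (rule sum_mono)
    fix j assume j: "j \<in> {..<n}"
    show "(if real j + 2 \<le> x then 1 else 0) \<le> (indicator {Gv n g j..} t :: real)"
      using Ga[OF g t, of j n] j unfolding x_def by (auto simp: indicator_def)
  qed
  finally show "real n * g t - 2 \<le> (\<Sum>j<n. indicator {Gv n g j..} t :: real)" unfolding x_def .
  have "(\<Sum>j<n. indicator {Gv n g j..} t :: real) \<le> (\<Sum>j<n. if real j \<le> x then 1 else 0 :: real)"
  proof (rule sum_mono)
    fix j assume j: "j \<in> {..<n}"
    show "(indicator {Gv n g j..} t :: real) \<le> (if real j \<le> x then 1 else 0)"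
    proof (cases "Gv n g j \<le> t")
      case True
      hence "\<not> real n * g t < real j" using Gb[OF g t, of j n] j by auto
      thus ?thesis using True unfolding x_def by (auto simp: indicator_def)
    qed (auto simp: indicator_def)
  qed
  also have "\<dots> \<le> min (real n) (x + 1)" by (rule cnt_hi[OF x0])
  finally show "(\<Sum>j<n. indicator {Gv n g j..} t :: real) \<le> real n * g t + 1" unfolding x_def by simp
qed

lemma value_bound:
  assumes f: "f \<in> G0" and g: "g \<in> G0" and n: "0 < n"
  shows "\<bar>z1_fun n (Uf f n) (alpha n) g - integral {0..1} (\<lambda>t. f t * g t)\<bar> \<le> 3 / real n"
proof -
  define Z where "Z = (\<Sum>j<n. Psis f n (Gv n g j))"
  define P where "P = (\<Sum>j<n. Psi f (Gv n g j))"
  define S where "S t = (\<Sum>j<n. indicator {Gv n g j..} t :: real)" for t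
  define J where "J = integral {0..1} (\<lambda>t. f t * g t)"
  have zv: "z1_fun n (Uf f n) (alpha n) g = Z / real n"
    unfolding z1_fun_def Uf_def Z_def z1_vec_def Gv_def by simp
  have A: "\<bar>Z - P\<bar> \<le> 1"
  proof -
    have "\<bar>Z - P\<bar> = \<bar>\<Sum>j<n. Psis f n (Gv n g j) - Psi f (Gv n g j)\<bar>"
      unfolding Z_def P_def by (simp add: sum_subtractf)
    also have "\<dots> \<le> (\<Sum>j<n. \<bar>Psis f n (Gv n g j) - Psi f (Gv n g j)\<bar>)" by (rule sum_abs)
    also have "\<dots> \<le> real (card {..<n}) * (1 / real n)"
      by (rule sum_bounded_above) (rule Psis_approx[OF f n])
    also have "\<dots> = 1" using n by simp
    finally show ?thesis .
  qed
  have fi: "(\<lambda>t. f t * indicator {Gv n g j..} t) integrable_on {0..1}" for j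
    by (rule f_ind_int[OF f]) auto
  have B: "P = integral {0..1} (\<lambda>t. f t * S t)"
  proof -
    have "integral {0..1} (\<lambda>t. f t * S t) = integral {0..1} (\<lambda>t. \<Sum>j<n. f t * indicator {Gv n g j..} t)"
      unfolding S_def by (simp add: sum_distrib_left)
    also have "\<dots> = (\<Sum>j<n. integral {0..1} (\<lambda>t. f t * indicator {Gv n g j..} t))"
      by (rule Henstock_Kurzweil_Integration.integral_sum) (auto intro: fi)
    also have "\<dots> = P" unfolding P_def Psi_def by simp
    finally show ?thesis by simp
  qed
  have iS: "(\<lambda>t. f t * S t) integrable_on {0..1}"
  proof -
    have "(\<lambda>t. \<Sum>j<n. f t * indicator {Gv n g j..} t) integrable_on {0..1}"
      by (rule integrable_sum) (auto intro: fi)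
    thus ?thesis unfolding S_def by (simp add: sum_distrib_left)
  qed
  have ifg: "(\<lambda>t. f t * g t) integrable_on {0..1}"
  proof (rule bint[where B=1])
    show "(\<lambda>t. f t * g t) \<in> borel_measurable borel"
      by (intro borel_measurable_times G0_borel f g)
    fix t show "\<bar>f t * g t\<bar> \<le> 1"
      using G0_bounds[OF f, of t] G0_bounds[OF g, of t] by (simp add: abs_mult mult_le_one)
  qed
  have ic: "(\<lambda>t. real n * (f t * g t)) integrable_on {0..1}"
    using integrable_on_cmult_left[OF ifg, of "real n"] by simp
  have C: "\<bar>P - real n * J\<bar> \<le> 2"
  proof -
    have "integral {0..1} (\<lambda>t. f t * S t - real n * (f t * g t)) = integral {0..1} (\<lambda>t. f t * S t) - integral {0..1} (\<lambda>t. real n * (f t * g t))"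
      by (rule Henstock_Kurzweil_Integration.integral_diff[OF iS ic])
    also have "integral {0..1} (\<lambda>t. real n * (f t * g t)) = real n * J" unfolding J_def by (rule integral_mult_right)
    finally have "P - real n * J = integral {0..1} (\<lambda>t. f t * S t - real n * (f t * g t))"
      unfolding B by simp
    also have "\<bar>\<dots>\<bar> \<le> 2"
    proof (rule int_bound01)
      show "(\<lambda>t. f t * S t - real n * (f t * g t)) integrable_on {0..1}"
        by (intro integrable_diff iS ic)
      fix t :: real assume t: "t \<in> {0..1}"
      have sb: "\<bar>S t - real n * g t\<bar> \<le> 2" using S_bounds[OF g _ _ n, of t] t unfolding S_def by auto
      have "\<bar>f t * S t - real n * (f t * g t)\<bar> = \<bar>f t\<bar> * \<bar>S t - real n * g t\<bar>"
        by (simp add: abs_mult[symmetric] algebra_simps)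
      also have "\<dots> \<le> 1 * 2" using G0_bounds[OF f, of t] sb by (intro mult_mono) auto
      finally show "\<bar>f t * S t - real n * (f t * g t)\<bar> \<le> 2" by simp
    qed
    finally show ?thesis .
  qed
  have "\<bar>Z - real n * J\<bar> \<le> 3" using A C by linarith
  hence "\<bar>Z - real n * J\<bar> / real n \<le> 3 / real n" using n by (intro divide_right_mono) auto
  moreover have "\<bar>Z / real n - J\<bar> = \<bar>Z - real n * J\<bar> / real n" using n by (simp add: field_simps)
  ultimately show ?thesis unfolding zv J_def[symmetric] by simp
qed

definition alphad :: "nat \<Rightarrow> nat \<Rightarrow> real \<Rightarrow> real" where
  "alphad n i x = - real n * (rho (real i + 1 - real n * x) - rho (real i + 1 - real n * x - (real n + 1)))"

lemma alpha_deriv: "(alpha n i has_real_derivative alphad n i x) (at x)"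
proof -
  have "((\<lambda>x. psi (real n + 1) (real i + 1 - real n * x)) has_real_derivative
        (rho (real i + 1 - real n * x) - rho (real i + 1 - real n * x - (real n + 1))) * (- real n)) (at x)"
    by (rule DERIV_chain2[where f="psi (real n + 1)", OF psi_deriv]) (auto intro!: derivative_eq_intros)
  thus ?thesis unfolding alpha_def[abs_def] alphad_def by (simp add: mult.commute)
qed

lemma alphad_cont: "continuous_on S (alphad n i)"
  unfolding alphad_def[abs_def]
  by (intro continuous_intros continuous_on_compose2[OF rho_cont]) auto

lemma alpha_C1: "alpha n i C1_differentiable_on S"
  unfolding C1_differentiable_on_def
  using alpha_deriv alphad_cont has_real_derivative_iff_has_vector_derivative by blast

lemma deriv_alpha: "deriv (alpha n i) x = alphad n i x"
  by (rule DERIV_imp_deriv[OF alpha_deriv])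

lemma alphad_simp: assumes "0 \<le> x" "i < n" shows "alphad n i x = - real n * rho (real i + 1 - real n * x)"
proof -
  have "real i + 1 - real n * x - (real n + 1) \<le> 0" using assms
    by (smt (verit) mult_nonneg_nonneg of_nat_0_le_iff of_nat_less_iff)
  thus ?thesis unfolding alphad_def using rho_zero by simp
qed

lemma Uf_deriv: assumes f: "f \<in> G0" and n: "0 < n" and i: "i < n"
  shows "((\<lambda>h. Uf f n (x(i:=h))) has_real_derivative Psid f n (x i) / real n) (at (x i))"
proof -
  define c where "c = (\<Sum>j\<in>{..<n} - {i}. Psis f n (x j))"
  have e: "(\<lambda>h. Uf f n (x(i:=h))) = (\<lambda>h. (Psis f n h + c) / real n)"
  proof
    fix h
    have "(\<Sum>j<n. Psis f n ((x(i:=h)) j)) = Psis f n ((x(i:=h)) i) + (\<Sum>j\<in>{..<n} - {i}. Psis f n ((x(i:=h)) j))"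
      by (rule sum.remove) (use i in auto)
    also have "(\<Sum>j\<in>{..<n} - {i}. Psis f n ((x(i:=h)) j)) = c" unfolding c_def by (intro sum.cong) auto
    finally show "Uf f n (x(i:=h)) = (Psis f n h + c) / real n" unfolding Uf_def by simp
  qed
  show ?thesis unfolding e
    using n by (auto intro!: derivative_eq_intros Psis_deriv[OF f n])
qed

lemma Uf_partial: assumes f: "f \<in> G0" and n: "0 < n" and i: "i < n"
  shows "partial_i (Uf f n) x i = Psid f n (x i) / real n"
  unfolding partial_i_def by (rule DERIV_imp_deriv[OF Uf_deriv[OF f n i]])

lemma rep_Z1: assumes f: "f \<in> G0" and n: "0 < n" shows "Z1_rep n (Uf f n) (alpha n)"
  unfolding Z1_rep_def C1_Rm_def
proof (intro conjI allI impI ballI alpha_C1)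
  fix i x assume i: "i < n"
  show "(\<lambda>h. Uf f n (x(i:=h))) differentiable (at (x i))"
    using Uf_deriv[OF f n i] real_differentiable_def by blast
next
  fix i assume i: "i < n"
  have "continuous_on (Rm n) (\<lambda>x. Psid f n (x i) / real n)"
    by (intro continuous_intros continuous_on_compose2[OF Psid_cont[OF f, of UNIV]]
        continuous_on_subset[OF continuous_on_product_coordinates]) (use n in auto)
  thus "continuous_on (Rm n) (\<lambda>x. partial_i (Uf f n) x i)"
    by (rule continuous_on_eq) (simp add: Uf_partial[OF f n i])
qed

lemma grad_formula: assumes f: "f \<in> G0" and n: "0 < n" and g: "g \<in> G0"
  shows "z1_grad n (Uf f n) (alpha n) g t = - (\<Sum>i<n. Psid f n (Gv n g i) * rho (real i + 1 - real n * g t))"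
proof -
  have "z1_grad n (Uf f n) (alpha n) g t = (\<Sum>i<n. (Psid f n (Gv n g i) / real n) * (- real n * rho (real i + 1 - real n * g t)))"
    unfolding z1_grad_def
  proof (rule sum.cong[OF refl])
    fix i assume i: "i \<in> {..<n}"
    have "z1_vec n (alpha n) g i = Gv n g i" using i unfolding z1_vec_def Gv_def by simp
    thus "partial_i (Uf f n) (z1_vec n (alpha n) g) i * deriv (alpha n i) (g t) =
        Psid f n (Gv n g i) / real n * (- real n * rho (real i + 1 - real n * g t))"
      using Uf_partial[OF f n] i deriv_alpha alphad_simp[OF G0_bounds(1)[OF g]] by simp
  qed
  also have "\<dots> = - (\<Sum>i<n. Psid f n (Gv n g i) * rho (real i + 1 - real n * g t))"
    using n by (simp add: sum_negf[symmetric])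
  finally show ?thesis .
qed

lemma rho_sum: assumes y: "0 \<le> y" shows "(\<Sum>i<n. rho (real i + 1 - y)) \<le> 3 / 2"
proof -
  define k where "k = nat \<lfloor>y\<rfloor>"
  have ky: "real k \<le> y" "y < real k + 1" unfolding k_def using y by linarith+
  have "(\<Sum>i<n. rho (real i + 1 - y)) = (\<Sum>i<n. if i = k then rho (real k + 1 - y) else 0)"
  proof (rule sum.cong[OF refl])
    fix i assume "i \<in> {..<n}"
    show "rho (real i + 1 - y) = (if i = k then rho (real k + 1 - y) else 0)"
    proof (cases "i = k")
      case False
      hence "i < k \<or> k < i" by auto
      hence "real i + 1 - y \<le> 0 \<or> 1 \<le> real i + 1 - y"
      proof
        assume "i < k" hence "real i + 1 \<le> real k" by simp
        thus ?thesis using ky by simp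
      next
        assume "k < i" hence "real k + 1 \<le> real i" by simp
        thus ?thesis using ky by simp
      qed
      thus ?thesis using False rho_zero by simp
    qed simp
  qed
  also have "\<dots> \<le> 3 / 2" using rho_le by (simp add: sum.delta)
  finally show ?thesis .
qed

lemma grad_bound: assumes f: "f \<in> G0" and n: "0 < n" and g: "g \<in> G0"
  shows "\<bar>z1_grad n (Uf f n) (alpha n) g t\<bar> \<le> 3 / 2"
proof -
  have "\<bar>\<Sum>i<n. Psid f n (Gv n g i) * rho (real i + 1 - real n * g t)\<bar>
      \<le> (\<Sum>i<n. \<bar>Psid f n (Gv n g i) * rho (real i + 1 - real n * g t)\<bar>)" by (rule sum_abs)
  also have "\<dots> \<le> (\<Sum>i<n. rho (real i + 1 - real n * g t))"
  proof (rule sum_mono)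
    fix i
    have "\<bar>Psid f n (Gv n g i)\<bar> * rho (real i + 1 - real n * g t) \<le> 1 * rho (real i + 1 - real n * g t)"
      using Psid_bound[OF f n] rho_nonneg by (intro mult_right_mono) auto
    thus "\<bar>Psid f n (Gv n g i) * rho (real i + 1 - real n * g t)\<bar> \<le> rho (real i + 1 - real n * g t)"
      using rho_nonneg by (simp add: abs_mult)
  qed
  also have "\<dots> \<le> 3 / 2" using G0_bounds(1)[OF g, of t] by (intro rho_sum) simp
  finally show ?thesis unfolding grad_formula[OF f n g] by simp
qed

context QS begin

lemma Gv_meas: assumes i: "i < n" shows "(\<lambda>g. Gv n g i) \<in> borel_measurable Q"
proof -
  have m: "(\<lambda>(g,s). alpha n i (g s)) \<in> borel_measurable QL"
    using measurable_compose[OF ev_meas borel_measurable_continuous_onI[OF alpha_cont]]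
    by (simp add: case_prod_beta')
  have "(\<lambda>g. integral {0..1} (\<lambda>s. alpha n i (g s))) \<in> borel_measurable Q"
    by (rule int_tools(3)[OF m, where B=1]) (use alpha_bounds G0_bounds i in auto)
  thus ?thesis unfolding Gv_def .
qed

lemma rep_Good: assumes f: "f \<in> G0" and n: "0 < n" shows "Good (n, Uf f n, alpha n)"
  unfolding Good_def
proof (intro conjI)
  show "Z1_rep (fst (n, Uf f n, alpha n)) (fst (snd (n, Uf f n, alpha n))) (snd (snd (n, Uf f n, alpha n)))"
    using rep_Z1[OF f n] by simp
  show "\<exists>B. \<forall>g\<in>G0. \<forall>t. \<bar>rg (n, Uf f n, alpha n) g t\<bar> \<le> B"
  proof (intro exI[of _ "3/2"] ballI allI)
    fix g t assume "g \<in> G0"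
    thus "\<bar>rg (n, Uf f n, alpha n) g t\<bar> \<le> 3 / 2" unfolding rg_def fst_conv snd_conv by (rule grad_bound[OF f n])
  qed
  have m: "(\<lambda>x. - (\<Sum>i<n. Psid f n (Gv n (fst x) i) * rho (real i + 1 - real n * fst x (snd x)))) \<in> borel_measurable QL"
  proof (intro borel_measurable_uminus borel_measurable_sum borel_measurable_times)
    fix i assume i: "i \<in> {..<n}"
    have "(\<lambda>x. Gv n (fst x) i) \<in> borel_measurable QL"
      by (rule measurable_compose[OF measurable_fst Gv_meas]) (use i in auto)
    thus "(\<lambda>x. Psid f n (Gv n (fst x) i)) \<in> borel_measurable QL"
      by (rule measurable_compose[OF _ borel_measurable_continuous_onI[OF Psid_cont[OF f]]])
    have c: "continuous_on UNIV (\<lambda>v. rho (real i + 1 - real n * v))"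
      by (intro continuous_on_compose2[OF rho_cont] continuous_intros) auto
    show "(\<lambda>x. rho (real i + 1 - real n * fst x (snd x))) \<in> borel_measurable QL"
      using measurable_compose[OF ev_meas borel_measurable_continuous_onI[OF c]] by (simp add: case_prod_beta')
  qed
  show "(\<lambda>(g,t). rg (n, Uf f n, alpha n) g t) \<in> borel_measurable QL"
  proof (rule measurable_cong[THEN iffD1, OF _ m])
    fix x assume "x \<in> space QL"
    hence "fst x \<in> G0" by (auto simp: space_pair_measure sp)
    thus "- (\<Sum>i<n. Psid f n (Gv n (fst x) i) * rho (real i + 1 - real n * fst x (snd x))) = (case x of (g, t) \<Rightarrow> rg (n, Uf f n, alpha n) g t)"
      unfolding rg_def by (cases x) (simp add: grad_formula[OF f n])
  qed
qed

lemma rep_nrm: assumes f: "f \<in> G0" and n: "0 < n" shows "nrm (n, Uf f n, alpha n) \<le> 9 / 4"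
proof -
  interpret prob_space Q by (rule prob)
  have G: "Good (n, Uf f n, alpha n)" by (rule rep_Good[OF f n])
  obtain B where mB: "(\<lambda>(g,t). (rg (n, Uf f n, alpha n) g t)\<^sup>2) \<in> borel_measurable QL"
      "\<And>g t. g \<in> G0 \<Longrightarrow> \<bar>(rg (n, Uf f n, alpha n) g t)\<^sup>2\<bar> \<le> B"
    using Good_sq[OF G G] by blast
  have pw: "integral {0..1} (\<lambda>t. (rg (n, Uf f n, alpha n) g t)\<^sup>2) \<le> 9 / 4" if g: "g \<in> G0" for g
  proof -
    have "\<bar>integral {0..1} (\<lambda>t. (rg (n, Uf f n, alpha n) g t)\<^sup>2)\<bar> \<le> 9 / 4"
    proof (rule int_bound01)
      show "(\<lambda>t. (rg (n, Uf f n, alpha n) g t)\<^sup>2) integrable_on {0..1}" using int_tools(1)[OF mB] g by blast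
      fix t
      have "\<bar>rg (n, Uf f n, alpha n) g t\<bar> \<le> 3 / 2" unfolding rg_def fst_conv snd_conv by (rule grad_bound[OF f n g])
      hence "\<bar>rg (n, Uf f n, alpha n) g t\<bar>\<^sup>2 \<le> (3 / 2)\<^sup>2" by (intro power_mono) auto
      thus "\<bar>(rg (n, Uf f n, alpha n) g t)\<^sup>2\<bar> \<le> 9 / 4" by (simp add: power2_eq_square)
    qed
    thus ?thesis by simp
  qed
  have "nrm (n, Uf f n, alpha n) \<le> (\<integral>g. 9 / 4 \<partial>Q)"
    unfolding nrm_def
  proof (rule integral_mono[OF gq_tools[OF mB]])
    show "integrable Q (\<lambda>g. 9 / 4 :: real)" by simp
    fix x assume "x \<in> space Q"
    thus "integral {0..1} (\<lambda>t. (rg (n, Uf f n, alpha n) x t)\<^sup>2) \<le> 9 / 4" by (intro pw) (simp add: sp)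
  qed
  also have "\<dots> = 9 / 4" by (simp add: prob_space)
  finally show ?thesis .
qed

lemma main_QS: assumes f: "f \<in> G0" shows "(\<lambda>g. integral {0..1} (\<lambda>t. f t * g t)) \<in> Dom_E Q"
proof -
  have mf: "(\<lambda>(g,t). f t * g t) \<in> borel_measurable QL"
  proof -
    have "(\<lambda>x. f (snd x)) \<in> borel_measurable QL"
      by (rule measurable_compose[OF measurable_snd]) (use G0_borel[OF f] in simp)
    moreover have ev': "(\<lambda>x. fst x (snd x)) \<in> borel_measurable QL" using ev_meas by (simp add: case_prod_beta')
    ultimately have "(\<lambda>x. f (snd x) * fst x (snd x)) \<in> borel_measurable QL"
      by (rule borel_measurable_times)
    thus ?thesis by (simp add: case_prod_beta')
  qed
  have bd: "\<bar>f t * g t\<bar> \<le> 1" if "g \<in> G0" for g t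
    using G0_bounds[OF f, of t] G0_bounds[OF that, of t] by (simp add: abs_mult mult_le_one)
  show ?thesis
  proof (rule dom_from_approx[where C="9/4"])
    show "(\<lambda>g. integral {0..1} (\<lambda>t. f t * g t)) \<in> borel_measurable Q"
      by (rule int_tools(3)[OF mf, where B=1]) (use bd in auto)
    show "\<bar>integral {0..1} (\<lambda>t. f t * g t)\<bar> \<le> 1" if "g \<in> G0" for g
      by (rule int_tools(2)[OF mf, where B=1]) (use bd that in auto)
    fix N
    define n where "n = 3 * Suc N"
    have n: "0 < n" unfolding n_def by simp
    have "\<forall>g\<in>G0. \<bar>rv (n, Uf f n, alpha n) g - integral {0..1} (\<lambda>t. f t * g t)\<bar> \<le> 1 / real (Suc N)"
    proof
      fix g assume g: "g \<in> G0"
      have "3 / real n = 1 / real (Suc N)" unfolding n_def by (simp add: field_simps)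
      thus "\<bar>rv (n, Uf f n, alpha n) g - integral {0..1} (\<lambda>t. f t * g t)\<bar> \<le> 1 / real (Suc N)"
        using value_bound[OF f g n] unfolding rv_def by simp
    qed
    thus "\<exists>r. Good r \<and> (\<forall>g\<in>G0. \<bar>rv r g - integral {0..1} (\<lambda>t. f t * g t)\<bar> \<le> 1 / real (Suc N)) \<and> nrm r \<le> 9 / 4"
      by (intro exI[of _ "(n, Uf f n, alpha n)"] conjI rep_Good[OF f n] rep_nrm[OF f n])
  qed
qed

end

theorem lemma7p6:
  fixes \<beta> :: real and Q :: "(real \<Rightarrow> real) measure" and f :: "real \<Rightarrow> real"
  assumes "\<beta> > 0" and "is_Q0 \<beta> Q" and "f \<in> G0"
  shows "(\<lambda>g. integral {0..1} (\<lambda>t. f t * g t)) \<in> Dom_E Q"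
proof -
  have h: "prob_space Q \<and> space Q = G0 \<and> sets Q = sets (restrict_space (Pi\<^sub>M UNIV (\<lambda>_. (borel :: real measure))) G0)"
    using assms(2) unfolding is_Q0_def by (elim conjE) (intro conjI; assumption)
  interpret QS Q using h by (simp only: QS_def)
  show ?thesis by (rule main_QS[OF assms(3)])
qed

end
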